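(* Let $G$ be a chordal graph and $t\ge 2$ an integer. Then the edge ideal $I(\overline{\mathcal{CH}_t(G)})$ has a $t$-linear resolution over any field $\mathbb{K}$.
   Context: All graphs are finite and simple, with $V(G)=\{x_1,\dots,x_n\}$ identified with variables of $R=\mathbb{K}[x_1,\dots,x_n]$. A graph is chordal if every induced cycle has length $3$. $\mathcal{CH}_t(G)$ is the $t$-uniform clutter on $V(G)$ whose edges are the $t$-element subsets inducing complete subgraphs. Its complement $\overline{\mathcal{CH}_t(G)}$ is the clutter whose edges are all $t$-element subsets of $V(G)$ that are not $t$-cliques of $G$. The edge ideal of a clutter $\mathcal{C}$ is $I(\mathcal{C})=(\prod_{x_i\in e}x_i : e\in E(\mathcal{C}))$. A homogeneous ideal $I$ has a $t$-linear resolution if all minimal generators have degree $t$ and $\beta_{i,i+j}(I)=0$ for all $i$ and all $j\ne t$. *)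

theory Defs
  imports Main "HOL-Library.Poly_Mapping"
begin

text \<open>A finite simple graph on the vertex type 'v (finite): V(G) = UNIV,
  adjacency E symmetric and irreflexive.\<close>

definition simple_graph :: "('v \<Rightarrow> 'v \<Rightarrow> bool) \<Rightarrow> bool" where
  "simple_graph E \<longleftrightarrow> (\<forall>u v. E u v \<longrightarrow> E v u) \<and> (\<forall>v. \<not> E v v)"

definition induced_cycle :: "('v \<Rightarrow> 'v \<Rightarrow> bool) \<Rightarrow> 'v list \<Rightarrow> bool" where
  "induced_cycle E cs \<longleftrightarrow> distinct cs \<and> length cs \<ge> 3 \<and>
     (\<forall>i < length cs. \<forall>j < length cs.
        E (cs ! i) (cs ! j) \<longleftrightarrow> (j = Suc i mod length cs \<or> i = Suc j mod length cs))"

definition chordal :: "('v \<Rightarrow> 'v \<Rightarrow> bool) \<Rightarrow> bool" where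
  "chordal E \<longleftrightarrow> (\<forall>cs. induced_cycle E cs \<longrightarrow> length cs = 3)"

definition is_clique :: "('v \<Rightarrow> 'v \<Rightarrow> bool) \<Rightarrow> 'v set \<Rightarrow> bool" where
  "is_clique E S \<longleftrightarrow> (\<forall>u\<in>S. \<forall>v\<in>S. u \<noteq> v \<longrightarrow> E u v)"

definition CH :: "nat \<Rightarrow> ('v \<Rightarrow> 'v \<Rightarrow> bool) \<Rightarrow> 'v set set" where
  "CH t E = {S. finite S \<and> card S = t \<and> is_clique E S}"

definition CH_compl :: "nat \<Rightarrow> ('v \<Rightarrow> 'v \<Rightarrow> bool) \<Rightarrow> 'v set set" where
  "CH_compl t E = {S. finite S \<and> card S = t \<and> S \<notin> CH t E}"

text \<open>Polynomials: finitely supported maps from monomials (exponent vectors) to coefficients.\<close>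
type_synonym ('v, 'k) mpoly = "('v \<Rightarrow>\<^sub>0 nat) \<Rightarrow>\<^sub>0 'k"

definition mdeg :: "('v \<Rightarrow>\<^sub>0 nat) \<Rightarrow> nat" where
  "mdeg m = (\<Sum>v\<in>Poly_Mapping.keys m. Poly_Mapping.lookup m v)"

definition homogeneous :: "('v, 'k::zero) mpoly \<Rightarrow> nat \<Rightarrow> bool" where
  "homogeneous p d \<longleftrightarrow> (\<forall>m\<in>Poly_Mapping.keys p. mdeg m = d)"

definition sqfree_monom :: "'v set \<Rightarrow> ('v, 'k::{zero,one}) mpoly" where
  "sqfree_monom S = Poly_Mapping.single (\<Sum>v\<in>S. Poly_Mapping.single v (1::nat)) 1"

definition ideal_gen :: "('v, 'k::comm_ring_1) mpoly set \<Rightarrow> ('v, 'k) mpoly set" where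
  "ideal_gen G = {p. \<exists>c. p = (\<Sum>g\<in>G. c g * g)}"

definition edge_ideal :: "'v set set \<Rightarrow> ('v, 'k::comm_ring_1) mpoly set" where
  "edge_ideal C = ideal_gen (sqfree_monom ` C)"

text \<open>A graded free resolution  ... -> F_2 -> F_1 -> F_0 -> I -> 0  of a homogeneous ideal I,
  described by
  - b i: rank of F_i;
  - dg i k: degree of the k-th basis element of F_i (F_i = sum_k R(-dg i k));
  - d i j k: for i = 0, d 0 0 k is the image in I of the k-th basis element of F_0;
             for i > 0, d i j k is the (j,k)-entry of the matrix of F_i -> F_(i-1).
  Elements of F_i are vectors v :: nat => R with v k = 0 for k >= b i.
  Target rank of the i-th map: 1 for i = 0 (the ring R itself), b (i-1) otherwise.\<close>

definition tgt_rank :: "(nat \<Rightarrow> nat) \<Rightarrow> nat \<Rightarrow> nat" where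
  "tgt_rank b i = (if i = 0 then 1 else b (i - 1))"

definition tgt_deg :: "(nat \<Rightarrow> nat \<Rightarrow> nat) \<Rightarrow> nat \<Rightarrow> nat \<Rightarrow> nat" where
  "tgt_deg dg i j = (if i = 0 then 0 else dg (i - 1) j)"

definition free_elems :: "(nat \<Rightarrow> nat) \<Rightarrow> nat \<Rightarrow> (nat \<Rightarrow> ('v, 'k::comm_ring_1) mpoly) set" where
  "free_elems b i = {v. \<forall>k\<ge>b i. v k = 0}"

definition res_map ::
  "(nat \<Rightarrow> nat) \<Rightarrow> (nat \<Rightarrow> nat \<Rightarrow> nat \<Rightarrow> ('v, 'k::comm_ring_1) mpoly) \<Rightarrow> nat
     \<Rightarrow> (nat \<Rightarrow> ('v, 'k) mpoly) \<Rightarrow> (nat \<Rightarrow> ('v, 'k) mpoly)" where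
  "res_map b d i v = (\<lambda>j. if j < tgt_rank b i then (\<Sum>k<b i. d i j k * v k) else 0)"

definition graded_free_resolution ::
  "('v, 'k::comm_ring_1) mpoly set \<Rightarrow> (nat \<Rightarrow> nat) \<Rightarrow> (nat \<Rightarrow> nat \<Rightarrow> nat)
     \<Rightarrow> (nat \<Rightarrow> nat \<Rightarrow> nat \<Rightarrow> ('v, 'k) mpoly) \<Rightarrow> bool" where
  "graded_free_resolution I b dg d \<longleftrightarrow>
     \<comment> \<open>the maps are homogeneous of degree 0\<close>
     (\<forall>i j k. j < tgt_rank b i \<longrightarrow> k < b i \<longrightarrow>
        (if tgt_deg dg i j \<le> dg i k then homogeneous (d i j k) (dg i k - tgt_deg dg i j)
         else d i j k = 0)) \<and>
     \<comment> \<open>F_0 maps onto I\<close>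
     (\<Union>v\<in>free_elems b 0. {res_map b d 0 v 0}) = I \<and>
     \<comment> \<open>exactness at every F_i\<close>
     (\<forall>i. {v\<in>free_elems b i. res_map b d i v = (\<lambda>_. 0)} = res_map b d (Suc i) ` free_elems b (Suc i))"

text \<open>Minimality: d_i(F_i) is contained in m F_(i-1) for all i >= 1, m = (x_v : v in V),
  i.e. all matrix entries have zero constant term.\<close>
definition minimal_graded_free_resolution ::
  "('v, 'k::comm_ring_1) mpoly set \<Rightarrow> (nat \<Rightarrow> nat) \<Rightarrow> (nat \<Rightarrow> nat \<Rightarrow> nat)
     \<Rightarrow> (nat \<Rightarrow> nat \<Rightarrow> nat \<Rightarrow> ('v, 'k) mpoly) \<Rightarrow> bool" where
  "minimal_graded_free_resolution I b dg d \<longleftrightarrow>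
     graded_free_resolution I b dg d \<and>
     (\<forall>i j k. 0 < i \<longrightarrow> Poly_Mapping.lookup (d i j k) 0 = 0)"

definition betti_of_res :: "(nat \<Rightarrow> nat) \<Rightarrow> (nat \<Rightarrow> nat \<Rightarrow> nat) \<Rightarrow> nat \<Rightarrow> nat \<Rightarrow> nat" where
  "betti_of_res b dg i j = card {k. k < b i \<and> dg i k = j}"

text \<open>I has a t-linear resolution: (all minimal generators have degree t, and)
  beta_{i,i+j}(I) = 0 for all i and all j <> t, computed from a minimal graded free
  resolution of I.  (Graded Betti numbers do not depend on the chosen minimal resolution.)
  The generator condition is beta_{0,j} = 0 for j <> t, since the basis of F_0 maps to a
  minimal homogeneous generating set of I.\<close>
definition has_linear_resolution :: "('v, 'k::comm_ring_1) mpoly set \<Rightarrow> nat \<Rightarrow> bool" where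
  "has_linear_resolution I t \<longleftrightarrow>
     (\<exists>b dg d. minimal_graded_free_resolution I b dg d \<and>
        (\<forall>i j. j \<noteq> t \<longrightarrow> betti_of_res b dg i (i + j) = 0))"

end

theory Submission
  imports Defs
begin


lemma poly_expand: "p = (\<Sum>m\<in>Poly_Mapping.keys p. Poly_Mapping.single m (Poly_Mapping.lookup p m))"
proof (rule poly_mapping_eqI)
  fix k
  show "Poly_Mapping.lookup p k = Poly_Mapping.lookup (\<Sum>m\<in>Poly_Mapping.keys p. Poly_Mapping.single m (Poly_Mapping.lookup p m)) k"
    by (cases "k \<in> Poly_Mapping.keys p")
       (simp_all add: lookup_sum lookup_single when_def in_keys_iff sum.delta)
qed

lemma mdeg_sum_superset:
  assumes "finite A" "Poly_Mapping.keys m \<subseteq> A"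
  shows "mdeg m = (\<Sum>v\<in>A. Poly_Mapping.lookup m v)"
  unfolding mdeg_def
  by (rule sum.mono_neutral_left) (use assms in \<open>auto simp: in_keys_iff\<close>)

lemma mdeg_add: "mdeg (a + b) = mdeg a + mdeg b"
proof -
  let ?A = "Poly_Mapping.keys a \<union> Poly_Mapping.keys b"
  have "mdeg (a + b) = (\<Sum>v\<in>?A. Poly_Mapping.lookup (a+b) v)"
    by (rule mdeg_sum_superset) (auto simp: keys_add[THEN subsetD] dest: keys_add[THEN subsetD])
  also have "\<dots> = (\<Sum>v\<in>?A. Poly_Mapping.lookup a v) + (\<Sum>v\<in>?A. Poly_Mapping.lookup b v)"
    by (simp add: lookup_add sum.distrib)
  also have "\<dots> = mdeg a + mdeg b"
    by (simp add: mdeg_sum_superset[symmetric])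
  finally show ?thesis .
qed

lemma mdeg_zero [simp]: "mdeg 0 = 0"
  by (simp add: mdeg_def)

lemma mdeg_single: "mdeg (Poly_Mapping.single v n) = n"
  by (simp add: mdeg_def)

lemma homogeneous_0 [simp]: "homogeneous 0 d"
  by (simp add: homogeneous_def)

lemma homogeneous_add: "homogeneous p d \<Longrightarrow> homogeneous q d \<Longrightarrow> homogeneous (p + q) d"
  unfolding homogeneous_def using keys_add[of p q] by auto

lemma homogeneous_uminus: "homogeneous (p::('v,'k::ab_group_add) mpoly) d \<Longrightarrow> homogeneous (- p) d"
  unfolding homogeneous_def by (simp add: in_keys_iff)

lemma homogeneous_sum: "(\<And>x. x \<in> A \<Longrightarrow> homogeneous (f x) d) \<Longrightarrow> homogeneous (sum f A) d"
  by (induction A rule: infinite_finite_induct) (auto intro: homogeneous_add)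

lemma homogeneous_mult:
  fixes p q :: "('v, 'k::comm_ring_1) mpoly"
  shows "homogeneous p a \<Longrightarrow> homogeneous q b \<Longrightarrow> homogeneous (p * q) (a + b)"
  unfolding homogeneous_def using keys_mult[of p q] by (force simp: mdeg_add)

lemma homogeneous_single: "homogeneous (Poly_Mapping.single m c) (mdeg m)"
  by (simp add: homogeneous_def)

definition hc :: "nat \<Rightarrow> ('v, 'k::comm_ring_1) mpoly \<Rightarrow> ('v, 'k) mpoly" where
  "hc n p = (\<Sum>m\<in>{m\<in>Poly_Mapping.keys p. mdeg m = n}. Poly_Mapping.single m (Poly_Mapping.lookup p m))"

lemma lookup_hc: "Poly_Mapping.lookup (hc n p) m = (if mdeg m = n then Poly_Mapping.lookup p m else 0)"
  unfolding hc_def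
  by (cases "m \<in> Poly_Mapping.keys p")
     (auto simp add: lookup_sum lookup_single when_def in_keys_iff sum.delta)

lemma hc_eqI: "(\<And>m. Poly_Mapping.lookup p m = Poly_Mapping.lookup q m) \<Longrightarrow> p = q"
  by (rule poly_mapping_eqI)

lemma hc_add: "hc n (p + q) = hc n p + hc n q"
  by (rule poly_mapping_eqI) (simp add: lookup_hc lookup_add)

lemma hc_0 [simp]: "hc n 0 = 0"
  by (rule poly_mapping_eqI) (simp add: lookup_hc)

lemma hc_uminus: "hc n (- p) = - hc n p"
  by (rule poly_mapping_eqI) (simp add: lookup_hc)

lemma hc_sum: "hc n (sum f A) = (\<Sum>x\<in>A. hc n (f x))"
  by (induction A rule: infinite_finite_induct) (auto simp: hc_add)

lemma homogeneous_hc: "homogeneous (hc n p) n"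
  unfolding homogeneous_def by (auto simp: in_keys_iff lookup_hc split: if_splits)

lemma hc_homog_same: "homogeneous p n \<Longrightarrow> hc n p = p"
  by (rule poly_mapping_eqI) (auto simp: lookup_hc homogeneous_def in_keys_iff)

lemma hc_homog_other: "homogeneous p k \<Longrightarrow> k \<noteq> n \<Longrightarrow> hc n p = 0"
  by (rule poly_mapping_eqI) (auto simp: lookup_hc homogeneous_def in_keys_iff)

lemma hc_decomp: "q = (\<Sum>d\<in>mdeg ` Poly_Mapping.keys q. hc d q)"
proof (rule poly_mapping_eqI)
  fix m
  have "Poly_Mapping.lookup (\<Sum>d\<in>mdeg ` Poly_Mapping.keys q. hc d q) m
      = (\<Sum>d\<in>mdeg ` Poly_Mapping.keys q. if mdeg m = d then Poly_Mapping.lookup q m else 0)"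
    by (simp add: lookup_sum lookup_hc)
  also have "\<dots> = (if mdeg m \<in> mdeg ` Poly_Mapping.keys q then Poly_Mapping.lookup q m else 0)"
    by (simp add: sum.delta)
  also have "\<dots> = Poly_Mapping.lookup q m"
    by (auto simp: in_keys_iff)
  finally show "Poly_Mapping.lookup q m = Poly_Mapping.lookup (\<Sum>d\<in>mdeg ` Poly_Mapping.keys q. hc d q) m" by simp
qed

lemma hc_mult:
  fixes p q :: "('v, 'k::comm_ring_1) mpoly"
  assumes hp: "homogeneous p e"
  shows "hc (N + e) (p * q) = p * hc N q"
proof -
  let ?D = "mdeg ` Poly_Mapping.keys q"
  have "hc (N + e) (p * q) = hc (N + e) (\<Sum>d\<in>?D. p * hc d q)"
    by (subst hc_decomp[of q]) (simp add: sum_distrib_left)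
  also have "\<dots> = (\<Sum>d\<in>?D. hc (N + e) (p * hc d q))" by (simp add: hc_sum)
  also have "\<dots> = (\<Sum>d\<in>?D. if d = N then p * hc d q else 0)"
  proof (rule sum.cong[OF refl])
    fix d
    have h: "homogeneous (p * hc d q) (e + d)" by (rule homogeneous_mult[OF hp homogeneous_hc])
    show "hc (N + e) (p * hc d q) = (if d = N then p * hc d q else 0)"
      using hc_homog_same[OF h] hc_homog_other[OF h] by (auto simp: add.commute)
  qed
  also have "\<dots> = (if N \<in> ?D then p * hc N q else 0)" by (simp add: sum.delta)
  also have "\<dots> = p * hc N q"
  proof -
    have "N \<notin> ?D \<Longrightarrow> hc N q = 0"
      by (rule poly_mapping_eqI) (auto simp: lookup_hc in_keys_iff)
    then show ?thesis by auto
  qed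
  finally show ?thesis .
qed

lemma homogeneous_1_const:
  assumes "homogeneous p 1" shows "Poly_Mapping.lookup p 0 = 0"
proof (rule ccontr)
  assume "Poly_Mapping.lookup p 0 \<noteq> 0"
  then have "0 \<in> Poly_Mapping.keys p" by (simp add: in_keys_iff)
  with assms have "mdeg (0::'a \<Rightarrow>\<^sub>0 nat) = 1" unfolding homogeneous_def by blast
  then show False by simp
qed


lemma dvd_exp_iff: "(\<exists>h. n = g + h) \<longleftrightarrow> (\<forall>v. Poly_Mapping.lookup g v \<le> Poly_Mapping.lookup (n :: 'v \<Rightarrow>\<^sub>0 nat) v)"
proof
  assume "\<exists>h. n = g + h" then show "\<forall>v. Poly_Mapping.lookup g v \<le> Poly_Mapping.lookup n v"
    by (auto simp: lookup_add)
next
  assume a: "\<forall>v. Poly_Mapping.lookup g v \<le> Poly_Mapping.lookup n v"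
  have "n = g + (n - g)"
    by (rule poly_mapping_eqI) (use a in \<open>simp add: lookup_add lookup_minus\<close>)
  then show "\<exists>h. n = g + h" by blast
qed

lemma keys_mult_single:
  fixes p :: "('v, 'k::comm_ring_1) mpoly"
  shows "Poly_Mapping.lookup (p * Poly_Mapping.single u 1) k =
     (if \<exists>n. k = n + u then Poly_Mapping.lookup p (k - u) else 0)"
proof -
  have "p * Poly_Mapping.single u 1 = (\<Sum>n\<in>Poly_Mapping.keys p. Poly_Mapping.single (n + u) (Poly_Mapping.lookup p n))"
    by (subst poly_expand[of p]) (simp add: sum_distrib_right mult_single)
  then have "Poly_Mapping.lookup (p * Poly_Mapping.single u 1) k =
      (\<Sum>n\<in>Poly_Mapping.keys p. if n + u = k then Poly_Mapping.lookup p n else 0)"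
    by (simp add: lookup_sum lookup_single when_def)
  also have "\<dots> = (if \<exists>n. k = n + u then Poly_Mapping.lookup p (k - u) else 0)"
  proof (cases "\<exists>n. k = n + u")
    case True
    then obtain n where k: "k = n + u" by blast
    have "(\<Sum>n'\<in>Poly_Mapping.keys p. if n' + u = k then Poly_Mapping.lookup p n' else 0)
        = (\<Sum>n'\<in>Poly_Mapping.keys p. if n' = n then Poly_Mapping.lookup p n' else 0)"
      by (rule sum.cong) (auto simp: k)
    also have "\<dots> = Poly_Mapping.lookup p n" by (simp add: sum.delta in_keys_iff)
    finally show ?thesis using k by simp
  next
    case False
    then show ?thesis by (auto intro!: sum.neutral)
  qed
  finally show ?thesis .
qed

lemma keys_mult_single':
  fixes p :: "('v, 'k::comm_ring_1) mpoly"
  shows "Poly_Mapping.keys (p * Poly_Mapping.single u 1) = (\<lambda>n. n + u) ` Poly_Mapping.keys p"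
proof -
  have "k \<in> Poly_Mapping.keys (p * Poly_Mapping.single u 1) \<longleftrightarrow> k \<in> (\<lambda>n. n + u) ` Poly_Mapping.keys p" for k
    by (auto simp: in_keys_iff keys_mult_single)
  then show ?thesis by blast
qed

definition monom :: "('v \<Rightarrow>\<^sub>0 nat) \<Rightarrow> ('v, 'k::comm_ring_1) mpoly" where
  "monom m = Poly_Mapping.single m 1"

lemma inj_monom: "inj (monom :: ('v \<Rightarrow>\<^sub>0 nat) \<Rightarrow> ('v, 'k::comm_ring_1) mpoly)"
  unfolding monom_def inj_def by (metis lookup_single_eq lookup_single_not_eq one_neq_zero)

lemma monom_ideal_mem:
  fixes M :: "('v \<Rightarrow>\<^sub>0 nat) set"
  assumes fin: "finite M"
  shows "(p :: ('v, 'k::comm_ring_1) mpoly) \<in> ideal_gen (monom ` M) \<longleftrightarrow>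
         (\<forall>n\<in>Poly_Mapping.keys p. \<exists>g\<in>M. \<exists>h. n = g + h)"
proof
  assume "p \<in> ideal_gen (monom ` M)"
  then obtain c where p: "p = (\<Sum>x\<in>monom ` M. c x * x)" unfolding ideal_gen_def by blast
  show "\<forall>n\<in>Poly_Mapping.keys p. \<exists>g\<in>M. \<exists>h. n = g + h"
  proof
    fix n assume "n \<in> Poly_Mapping.keys p"
    then have "n \<in> (\<Union>x\<in>monom ` M. Poly_Mapping.keys (c x * x))"
      using keys_sum[of "\<lambda>x. c x * x" "monom ` M"] p by blast
    then obtain g where g: "g \<in> M" "n \<in> Poly_Mapping.keys (c (monom g) * monom g)" by blast
    then have "n \<in> (\<lambda>n. n + g) ` Poly_Mapping.keys (c (monom g))"
      by (simp add: monom_def keys_mult_single')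
    then obtain na where "n = na + g" by blast
    then show "\<exists>g\<in>M. \<exists>h. n = g + h" using g(1) by (metis add.commute)
  qed
next
  assume a: "\<forall>n\<in>Poly_Mapping.keys p. \<exists>g\<in>M. \<exists>h. n = g + h"
  define K where "K = Poly_Mapping.keys p"
  define sel where "sel n = (SOME g. g \<in> M \<and> (\<exists>h. n = g + h))" for n
  have sel: "sel n \<in> M \<and> (\<exists>h. n = sel n + h)" if "n \<in> K" for n
    unfolding sel_def by (rule someI_ex) (use a that K_def in blast)
  define hh where "hh n = (SOME h. n = sel n + h)" for n
  have hh: "n = hh n + sel n" if "n \<in> K" for n
    unfolding hh_def using someI_ex[of "\<lambda>h. n = sel n + h"] sel[OF that] by (simp add: add.commute)
  define c where "c (x::('v,'k) mpoly) = (\<Sum>n\<in>{n\<in>K. monom (sel n) = x}. Poly_Mapping.single (hh n) (Poly_Mapping.lookup p n))" for x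
  have "(\<Sum>x\<in>monom ` M. c x * x) = (\<Sum>g\<in>M. c (monom g) * monom g)"
    by (rule sum.reindex[unfolded comp_def]) (use inj_monom in \<open>auto intro: inj_on_subset\<close>)
  also have "\<dots> = (\<Sum>g\<in>M. \<Sum>n\<in>{n\<in>K. sel n = g}. Poly_Mapping.single n (Poly_Mapping.lookup p n))"
  proof (rule sum.cong[OF refl])
    fix g assume "g \<in> M"
    have e: "{n\<in>K. monom (sel n) = (monom g :: ('v, 'k) mpoly)} = {n\<in>K. sel n = g}"
      using inj_monom[where 'k='k] by (auto simp: inj_def)
    show "c (monom g) * monom g = (\<Sum>n\<in>{n\<in>K. sel n = g}. Poly_Mapping.single n (Poly_Mapping.lookup p n))"
      unfolding c_def e sum_distrib_right
      by (rule sum.cong[OF refl]) (use hh in \<open>auto simp: monom_def mult_single\<close>)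
  qed
  also have "\<dots> = (\<Sum>n\<in>K. Poly_Mapping.single n (Poly_Mapping.lookup p n))"
    by (rule sum.group) (use fin sel K_def in auto)
  also have "\<dots> = p" unfolding K_def by (rule poly_expand[symmetric])
  finally show "p \<in> ideal_gen (monom ` M)" unfolding ideal_gen_def by blast
qed

lemma colon_mem:
  fixes M :: "('v \<Rightarrow>\<^sub>0 nat) set"
  assumes fin: "finite M"
  shows "(p :: ('v, 'k::comm_ring_1) mpoly) * monom u \<in> ideal_gen (monom ` M) \<longleftrightarrow>
         (\<forall>n\<in>Poly_Mapping.keys p. \<exists>g\<in>M. \<exists>h. n + u = g + h)"
  unfolding monom_ideal_mem[OF fin] by (simp add: monom_def keys_mult_single')

definition sqexp :: "'v set \<Rightarrow> ('v \<Rightarrow>\<^sub>0 nat)" where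
  "sqexp S = (\<Sum>v\<in>S. Poly_Mapping.single v 1)"

lemma lookup_sqexp: "finite S \<Longrightarrow> Poly_Mapping.lookup (sqexp S) v = (if v \<in> S then 1 else 0)"
  unfolding sqexp_def by (simp add: lookup_sum lookup_single when_def)

lemma sqfree_monom_eq: "sqfree_monom S = monom (sqexp S)"
  unfolding sqfree_monom_def monom_def sqexp_def by simp

lemma sqexp_inj: "finite S \<Longrightarrow> finite T \<Longrightarrow> sqexp S = sqexp T \<Longrightarrow> S = T"
  by (metis lookup_sqexp one_neq_zero subsetI subset_antisym)

lemma mdeg_sqexp: "finite S \<Longrightarrow> mdeg (sqexp S) = card S"
proof -
  assume f: "finite S"
  have "mdeg (sqexp S) = (\<Sum>v\<in>S. Poly_Mapping.lookup (sqexp S) v)"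
    by (rule mdeg_sum_superset) (use f in \<open>auto simp: in_keys_iff lookup_sqexp split: if_splits\<close>)
  also have "\<dots> = card S" using f by (simp add: lookup_sqexp)
  finally show ?thesis .
qed

lemma homogeneous_monom: "homogeneous (monom m) (mdeg m)"
  unfolding monom_def by (rule homogeneous_single)

lemma sqexp_single: "sqexp {s} = Poly_Mapping.single s 1"
  by (simp add: sqexp_def)

lemma ideal_gen_empty: "ideal_gen {} = {0}"
  by (simp add: ideal_gen_def)

lemma ideal_gen_insert:
  assumes "finite G" "g \<notin> G"
  shows "ideal_gen (insert g G) = {p + r * g | p r. p \<in> ideal_gen G}"
proof
  show "ideal_gen (insert g G) \<subseteq> {p + r * g | p r. p \<in> ideal_gen G}"
  proof
    fix q assume "q \<in> ideal_gen (insert g G)"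
    then obtain c where q: "q = (\<Sum>x\<in>insert g G. c x * x)" unfolding ideal_gen_def by blast
    then have "q = (\<Sum>x\<in>G. c x * x) + c g * g" using assms by (simp add: add.commute)
    moreover have "(\<Sum>x\<in>G. c x * x) \<in> ideal_gen G" unfolding ideal_gen_def by blast
    ultimately show "q \<in> {p + r * g | p r. p \<in> ideal_gen G}" by blast
  qed
next
  show "{p + r * g | p r. p \<in> ideal_gen G} \<subseteq> ideal_gen (insert g G)"
  proof clarify
    fix p r assume "p \<in> ideal_gen G"
    then obtain c where p: "p = (\<Sum>x\<in>G. c x * x)" unfolding ideal_gen_def by blast
    have "(\<Sum>x\<in>insert g G. (c(g := r)) x * x) = r * g + (\<Sum>x\<in>G. (c(g := r)) x * x)"
      using assms by simp
    also have "(\<Sum>x\<in>G. (c(g := r)) x * x) = p" unfolding p by (rule sum.cong) (use assms in auto)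
    finally have eq: "(\<Sum>x\<in>insert g G. (c(g := r)) x * x) = p + r * g" by (simp add: add.commute)
    show "p + r * g \<in> ideal_gen (insert g G)" unfolding ideal_gen_def mem_Collect_eq
      by (rule exI[of _ "c(g := r)"]) (rule eq[symmetric])
  qed
qed


definition mapM :: "nat \<Rightarrow> (nat \<Rightarrow> nat \<Rightarrow> ('v,'k::comm_ring_1) mpoly) \<Rightarrow> nat \<Rightarrow> (nat \<Rightarrow> ('v,'k) mpoly) \<Rightarrow> nat \<Rightarrow> ('v,'k) mpoly" where
  "mapM n A m v = (\<lambda>j. if j < n then (\<Sum>k<m. A j k * v k) else 0)"

lemma res_map_mapM: "res_map b d i = mapM (tgt_rank b i) (d i) (b i)"
  by (simp add: res_map_def mapM_def fun_eq_iff)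

lemma free_elems_iff: "v \<in> free_elems b i \<longleftrightarrow> (\<forall>k\<ge>b i. v k = 0)"
  by (simp add: free_elems_def)

lemma mapM_free: "b i = n \<Longrightarrow> mapM n A m v \<in> free_elems b i"
  by (simp add: free_elems_def mapM_def)

lemma mapM_add: "mapM n A m (\<lambda>k. v k + w k) = (\<lambda>j. mapM n A m v j + mapM n A m w j)"
  by (simp add: mapM_def fun_eq_iff distrib_left sum.distrib)

lemma mapM_uminus: "mapM n A m (\<lambda>k. - v k) = (\<lambda>j. - mapM n A m v j)"
  by (simp add: mapM_def fun_eq_iff sum_negf)

lemma mapM_zero: "mapM n A m (\<lambda>k. 0) = (\<lambda>j. 0)"
  by (simp add: mapM_def fun_eq_iff)

lemma mapM_comp: "mapM n A m (mapM m B p v) = mapM n (\<lambda>j k. \<Sum>l<m. A j l * B l k) p v"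
proof (rule ext)
  fix j
  show "mapM n A m (mapM m B p v) j = mapM n (\<lambda>j k. \<Sum>l<m. A j l * B l k) p v j"
  proof (cases "j < n")
    case True
    have "(\<Sum>l<m. A j l * (if l < m then \<Sum>k<p. B l k * v k else 0)) = (\<Sum>l<m. \<Sum>k<p. A j l * B l k * v k)"
      by (rule sum.cong) (auto simp: sum_distrib_left mult.assoc)
    also have "\<dots> = (\<Sum>k<p. \<Sum>l<m. A j l * B l k * v k)" by (rule sum.swap)
    also have "\<dots> = (\<Sum>k<p. (\<Sum>l<m. A j l * B l k) * v k)" by (simp add: sum_distrib_right)
    finally show ?thesis using True by (simp add: mapM_def)
  qed (simp add: mapM_def)
qed

lemma mapM_cong: "(\<And>j k. j < n \<Longrightarrow> k < m \<Longrightarrow> A j k = A' j k) \<Longrightarrow> (\<And>k. k < m \<Longrightarrow> v k = v' k) \<Longrightarrow>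
   mapM n A m v = mapM n A' m v'"
  by (auto simp: mapM_def fun_eq_iff intro!: sum.cong)

lemma mapM_unit: "c < m \<Longrightarrow> mapM n A m (\<lambda>k. if k = c then 1 else 0) = (\<lambda>j. if j < n then A j c else 0)"
  by (simp add: mapM_def fun_eq_iff if_distrib sum.delta cong: if_cong)

lemma hom_preimage:
  assumes "\<And>j k. j < n \<Longrightarrow> k < m \<Longrightarrow> homogeneous (A j k) e"
    and "\<And>j. j < n \<Longrightarrow> homogeneous (mapM n A m x j) (N + e)"
  shows "mapM n A m (\<lambda>k. hc N (x k)) = mapM n A m x"
proof (rule ext)
  fix j
  show "mapM n A m (\<lambda>k. hc N (x k)) j = mapM n A m x j"
  proof (cases "j < n")
    case True
    have "(\<Sum>k<m. A j k * hc N (x k)) = (\<Sum>k<m. hc (N + e) (A j k * x k))"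
      by (rule sum.cong[OF refl]) (simp add: hc_mult[OF assms(1)[OF True]])
    also have "\<dots> = hc (N + e) (\<Sum>k<m. A j k * x k)" by (simp add: hc_sum)
    also have "\<dots> = (\<Sum>k<m. A j k * x k)"
      using hc_homog_same[OF assms(2)[OF True]] True by (simp add: mapM_def)
    finally show ?thesis using True by (simp add: mapM_def)
  qed (simp add: mapM_def)
qed

definition LR :: "('v,'k::comm_ring_1) mpoly set \<Rightarrow> nat \<Rightarrow> (nat \<Rightarrow> nat) \<Rightarrow> (nat \<Rightarrow> nat \<Rightarrow> nat \<Rightarrow> ('v,'k) mpoly) \<Rightarrow> bool" where
  "LR I t b d \<longleftrightarrow> (\<forall>k<b 0. homogeneous (d 0 0 k) t) \<and>
     (\<forall>i j k. 0 < i \<longrightarrow> j < tgt_rank b i \<longrightarrow> k < b i \<longrightarrow> homogeneous (d i j k) 1) \<and>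
     (\<Union>v\<in>free_elems b 0. {res_map b d 0 v 0}) = I \<and>
     (\<forall>i. {v\<in>free_elems b i. res_map b d i v = (\<lambda>_. 0)} = res_map b d (Suc i) ` free_elems b (Suc i))"

lemma LR_complex: "LR I t b d \<Longrightarrow> v \<in> free_elems b (Suc i) \<Longrightarrow> res_map b d i (res_map b d (Suc i) v) = (\<lambda>_. 0)"
  unfolding LR_def by blast

lemma LR_exact: "LR I t b d \<Longrightarrow> v \<in> free_elems b i \<Longrightarrow> res_map b d i v = (\<lambda>_. 0) \<Longrightarrow>
   \<exists>w\<in>free_elems b (Suc i). v = res_map b d (Suc i) w"
  unfolding LR_def by blast

lemma LR_img: "LR I t b d \<Longrightarrow> p \<in> I \<longleftrightarrow> (\<exists>v\<in>free_elems b 0. p = res_map b d 0 v 0)"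
  unfolding LR_def by blast

lemma LR_hom0: "LR I t b d \<Longrightarrow> k < b 0 \<Longrightarrow> homogeneous (d 0 0 k) t"
  unfolding LR_def by blast

lemma LR_homS: "LR I t b d \<Longrightarrow> j < b i \<Longrightarrow> k < b (Suc i) \<Longrightarrow> homogeneous (d (Suc i) j k) 1"
  unfolding LR_def tgt_rank_def by auto

lemma LR_zero: "LR {0} t (\<lambda>_. 0) (\<lambda>_ _ _. 0)"
  unfolding LR_def by (auto simp: free_elems_def res_map_def tgt_rank_def fun_eq_iff)

definition trunc :: "(nat \<Rightarrow> nat) \<Rightarrow> (nat \<Rightarrow> nat \<Rightarrow> nat \<Rightarrow> ('v,'k::comm_ring_1) mpoly) \<Rightarrow> nat \<Rightarrow> nat \<Rightarrow> nat \<Rightarrow> ('v,'k) mpoly" where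
  "trunc b d i j k = (if j < tgt_rank b i \<and> k < b i then d i j k else 0)"

lemma res_map_trunc: "res_map b (trunc b d) = res_map b d"
  unfolding res_map_mapM by (intro ext mapM_cong) (auto simp: trunc_def)

lemma LR_trunc: "LR I t b d \<Longrightarrow> LR I t b (trunc b d)"
  unfolding LR_def res_map_trunc by (auto simp: trunc_def tgt_rank_def)

lemma LR_has_linear_resolution:
  assumes "LR I t b d0"
  shows "has_linear_resolution I t"
  unfolding has_linear_resolution_def
proof (intro exI conjI allI impI)
  let ?dg = "\<lambda>i k. t + i"
  let ?d = "trunc b d0"
  have assms: "LR I t b ?d" by (rule LR_trunc[OF assms])
  show "minimal_graded_free_resolution I b ?dg ?d"
    unfolding minimal_graded_free_resolution_def graded_free_resolution_def
  proof (intro conjI allI impI)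
    fix i j k assume j: "j < tgt_rank b i" and k: "k < b i"
    show "if tgt_deg ?dg i j \<le> t + i then homogeneous (?d i j k) (t + i - tgt_deg ?dg i j) else ?d i j k = 0"
    proof (cases i)
      case 0 then show ?thesis using LR_hom0[OF assms] k j by (simp add: tgt_deg_def tgt_rank_def)
    next
      case (Suc i') then show ?thesis using LR_homS[OF assms, of j i' k] j k by (simp add: tgt_deg_def tgt_rank_def)
    qed
  next
    show "(\<Union>v\<in>free_elems b 0. {res_map b ?d 0 v 0}) = I" using assms unfolding LR_def by blast
  next
    fix i show "{v \<in> free_elems b i. res_map b ?d i v = (\<lambda>_. 0)} = res_map b ?d (Suc i) ` free_elems b (Suc i)"
      using assms unfolding LR_def by blast
  next
    fix i j k :: nat assume "0 < i"
    then obtain i' where i: "i = Suc i'" by (cases i) auto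
    show "Poly_Mapping.lookup (?d i j k) 0 = 0"
    proof (cases "j < tgt_rank b i \<and> k < b i")
      case True
      then have "homogeneous (?d i j k) 1" using LR_homS[OF assms, of j i' k] i by (simp add: tgt_rank_def)
      then show ?thesis by (rule homogeneous_1_const)
    next
      case False then show ?thesis unfolding trunc_def by auto
    qed
  qed
next
  fix i j assume "j \<noteq> t"
  show "betti_of_res b (\<lambda>i k. t + i) i (i + j) = 0"
    using \<open>j \<noteq> t\<close> by (simp add: betti_of_res_def)
qed


lemma sum_split_lessThan: "(\<Sum>k<(n::nat) + m. h k) = (\<Sum>k<n. h k) + (\<Sum>c<m. h (n + c))"
proof -
  have "(\<Sum>k<n + m. h k) = sum h ({..<n} \<union> {n..<n + m})"
    by (rule arg_cong[where f="sum h"]) auto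
  also have "\<dots> = (\<Sum>k<n. h k) + (\<Sum>k\<in>{n..<n + m}. h k)"
    by (rule sum.union_disjoint) auto
  also have "(\<Sum>k\<in>{n..<n + m}. h k) = (\<Sum>c<m. h (n + c))"
    using sum.shift_bounds_nat_ivl[of h 0 n m] by (simp add: atLeast0LessThan add.commute)
  finally show ?thesis by simp
qed

lemma hom11: fixes p q :: "('v,'k::comm_ring_1) mpoly" shows "homogeneous p 1 \<Longrightarrow> homogeneous q 1 \<Longrightarrow> homogeneous (p * q) (Suc (Suc 0))"
  using homogeneous_mult[of p 1 q 1] by simp

definition join :: "nat \<Rightarrow> (nat \<Rightarrow> 'a) \<Rightarrow> (nat \<Rightarrow> 'a) \<Rightarrow> nat \<Rightarrow> 'a" where
  "join n f g = (\<lambda>k. if k < n then f k else g (k - n))"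

lemma join_cong: "(\<And>k. k < n \<Longrightarrow> f k = f' k) \<Longrightarrow> (\<And>c. g c = g' c) \<Longrightarrow> join n f g = join n f' g'"
  by (auto simp: join_def fun_eq_iff)

lemma join_zero: "join n (\<lambda>_. 0) (\<lambda>_. 0) = (\<lambda>_. 0)"
  by (simp add: join_def fun_eq_iff)

lemma join_split: "v = join n (\<lambda>k. if k < n then v k else 0) (\<lambda>c. v (n + c))"
  by (simp add: join_def fun_eq_iff)

lemma join_eq_zero: "join n f g = (\<lambda>_. 0) \<Longrightarrow> (\<forall>k<n. f k = 0) \<and> (\<forall>c. g c = 0)"
  unfolding join_def fun_eq_iff by (metis add_diff_cancel_left' not_add_less1)

locale cone =
  fixes I :: "('v, 'k::comm_ring_1) mpoly set" and t :: nat
    and bF :: "nat \<Rightarrow> nat" and dF :: "nat \<Rightarrow> nat \<Rightarrow> nat \<Rightarrow> ('v, 'k) mpoly"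
    and J :: "('v, 'k) mpoly set" and bG :: "nat \<Rightarrow> nat" and dG :: "nat \<Rightarrow> nat \<Rightarrow> nat \<Rightarrow> ('v, 'k) mpoly"
    and u :: "('v, 'k) mpoly"
  assumes F: "LR I t bF dF" and G: "LR J 1 bG dG"
    and J: "\<And>r. r \<in> J \<longleftrightarrow> r * u \<in> I" and hu: "homogeneous u t"
begin

abbreviation rF where "rF \<equiv> res_map bF dF"
abbreviation rG where "rG \<equiv> res_map bG dG"

definition unitv :: "nat \<Rightarrow> nat \<Rightarrow> ('v,'k) mpoly" where "unitv c = (\<lambda>k. if k = c then 1 else 0)"

lemma unitv_free: "c < b i \<Longrightarrow> unitv c \<in> free_elems b i"
  by (simp add: unitv_def free_elems_def)

definition col0 :: "nat \<Rightarrow> (nat \<Rightarrow> ('v,'k) mpoly) \<Rightarrow> bool" where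
  "col0 c x \<longleftrightarrow> (\<forall>l. homogeneous (x l) 1) \<and> rF 0 x = (\<lambda>j. if j < 1 then u * dG 0 0 c else 0)"

definition colS :: "nat \<Rightarrow> (nat \<Rightarrow> nat \<Rightarrow> ('v,'k) mpoly) \<Rightarrow> nat \<Rightarrow> (nat \<Rightarrow> ('v,'k) mpoly) \<Rightarrow> bool" where
  "colS k M c x \<longleftrightarrow> (\<forall>l. homogeneous (x l) 1) \<and> rF (Suc k) x = mapM (bF k) M (bG k) (rG (Suc k) (unitv c))"

primrec phi :: "nat \<Rightarrow> nat \<Rightarrow> nat \<Rightarrow> ('v,'k) mpoly" where
  "phi 0 = (\<lambda>l c. (SOME x. col0 c x) l)"
| "phi (Suc k) = (\<lambda>l c. (SOME x. colS k (phi k) c x) l)"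

definition P :: "nat \<Rightarrow> (nat \<Rightarrow> ('v,'k) mpoly) \<Rightarrow> nat \<Rightarrow> ('v,'k) mpoly" where
  "P k g = mapM (bF k) (phi k) (bG k) g"

definition Cmod :: "nat \<Rightarrow> bool" where
  "Cmod k \<longleftrightarrow> (case k of 0 \<Rightarrow> (\<forall>g. rF 0 (P 0 g) = (\<lambda>j. if j < 1 then u * rG 0 g 0 else 0))
                 | Suc k' \<Rightarrow> (\<forall>g. rF (Suc k') (P (Suc k') g) = P k' (rG (Suc k') g)))"

definition ok :: "nat \<Rightarrow> bool" where
  "ok k \<longleftrightarrow> (\<forall>c<bG k. \<forall>l. homogeneous (phi k l c) 1) \<and> Cmod k"

lemma rG_unit: "c < bG (Suc k) \<Longrightarrow> rG (Suc k) (unitv c) = (\<lambda>j. if j < bG k then dG (Suc k) j c else 0)"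
  unfolding res_map_mapM unitv_def by (simp add: mapM_unit tgt_rank_def)

lemma C0_from:
  assumes "\<And>c. c < bG 0 \<Longrightarrow> col0 c (\<lambda>l. phi 0 l c)"
  shows "rF 0 (P 0 g) = (\<lambda>j. if j < 1 then u * rG 0 g 0 else 0)"
proof -
  have "rF 0 (P 0 g) = mapM 1 (\<lambda>j c. \<Sum>l<bF 0. dF 0 j l * phi 0 l c) (bG 0) g"
    unfolding P_def res_map_mapM by (simp add: mapM_comp tgt_rank_def)
  also have "\<dots> = mapM 1 (\<lambda>j c. u * dG 0 0 c) (bG 0) g"
  proof (rule mapM_cong)
    fix j c assume "j < (1::nat)" "c < bG 0"
    then have "rF 0 (\<lambda>l. phi 0 l c) 0 = u * dG 0 0 c" using assms[of c] unfolding col0_def by simp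
    then show "(\<Sum>l<bF 0. dF 0 j l * phi 0 l c) = u * dG 0 0 c"
      using \<open>j < 1\<close> by (simp add: res_map_mapM mapM_def tgt_rank_def)
  qed simp
  also have "\<dots> = (\<lambda>j. if j < 1 then u * rG 0 g 0 else 0)"
    by (simp add: mapM_def res_map_mapM tgt_rank_def sum_distrib_left mult.assoc fun_eq_iff)
  finally show ?thesis .
qed

lemma CS_from:
  assumes "\<And>c. c < bG (Suc k) \<Longrightarrow> colS k (phi k) c (\<lambda>l. phi (Suc k) l c)"
  shows "rF (Suc k) (P (Suc k) g) = P k (rG (Suc k) g)"
proof -
  have "rF (Suc k) (P (Suc k) g) = mapM (bF k) (\<lambda>j c. \<Sum>l<bF (Suc k). dF (Suc k) j l * phi (Suc k) l c) (bG (Suc k)) g"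
    unfolding P_def res_map_mapM by (simp add: mapM_comp tgt_rank_def)
  also have "\<dots> = mapM (bF k) (\<lambda>j c. \<Sum>c'<bG k. phi k j c' * dG (Suc k) c' c) (bG (Suc k)) g"
  proof (rule mapM_cong)
    fix j c assume j: "j < bF k" and c: "c < bG (Suc k)"
    have "rF (Suc k) (\<lambda>l. phi (Suc k) l c) j = mapM (bF k) (phi k) (bG k) (rG (Suc k) (unitv c)) j"
      using assms[OF c] unfolding colS_def by simp
    also have "\<dots> = (\<Sum>c'<bG k. phi k j c' * dG (Suc k) c' c)"
      using j by (simp add: rG_unit[OF c] mapM_def)
    finally show "(\<Sum>l<bF (Suc k). dF (Suc k) j l * phi (Suc k) l c) = (\<Sum>c'<bG k. phi k j c' * dG (Suc k) c' c)"
      using j by (simp add: res_map_mapM mapM_def tgt_rank_def)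
  qed simp
  also have "\<dots> = P k (rG (Suc k) g)"
    unfolding P_def res_map_mapM by (simp add: mapM_comp tgt_rank_def)
  finally show ?thesis .
qed

lemma P_free: "P k g \<in> free_elems bF k"
  unfolding P_def by (rule mapM_free) simp

lemma ok_all: "ok k"
proof (induction k)
  case 0
  have ex: "\<exists>x. col0 c x" if c: "c < bG 0" for c
  proof -
    have "dG 0 0 c = rG 0 (unitv c) 0"
      using c by (simp add: res_map_mapM unitv_def mapM_unit tgt_rank_def)
    then have "dG 0 0 c \<in> J" using LR_img[OF G] unitv_free[of c bG 0, OF c] by blast
    then have "dG 0 0 c * u \<in> I" using J by blast
    then obtain v where v: "v \<in> free_elems bF 0" "dG 0 0 c * u = rF 0 v 0"
      using LR_img[OF F] by blast
    have rv: "rF 0 v = (\<lambda>j. if j < 1 then u * dG 0 0 c else 0)"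
      using v(2) by (auto simp: res_map_mapM mapM_def tgt_rank_def fun_eq_iff mult.commute)
    have hd: "homogeneous (dG 0 0 c) 1" using LR_hom0[OF G c] .
    have "mapM 1 (dF 0) (bF 0) (\<lambda>k. hc 1 (v k)) = mapM 1 (dF 0) (bF 0) v"
    proof (rule hom_preimage)
      fix j k assume "j < (1::nat)" "k < bF 0" then show "homogeneous (dF 0 j k) t"
        using LR_hom0[OF F] by simp
    next
      fix j assume "j < (1::nat)"
      then have "mapM 1 (dF 0) (bF 0) v j = u * dG 0 0 c" using rv by (simp add: res_map_mapM tgt_rank_def)
      then show "homogeneous (mapM 1 (dF 0) (bF 0) v j) (1 + t)"
        using homogeneous_mult[OF hu hd] by (simp add: add.commute)
    qed
    then have "col0 c (\<lambda>k. hc 1 (v k))"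
      unfolding col0_def using rv by (simp add: res_map_mapM tgt_rank_def homogeneous_hc)
    then show ?thesis by blast
  qed
  have cols: "col0 c (\<lambda>l. phi 0 l c)" if "c < bG 0" for c
    using someI_ex[OF ex[OF that]] by simp
  show ?case unfolding ok_def Cmod_def
    using cols C0_from by (auto simp: col0_def)
next
  case (Suc k)
  have ex: "\<exists>x. colS k (phi k) c x" if c: "c < bG (Suc k)" for c
  proof -
    let ?y = "P k (rG (Suc k) (unitv c))"
    have yfree: "?y \<in> free_elems bF k" by (rule P_free)
    have ry: "rF k ?y = (\<lambda>_. 0)"
    proof (cases k)
      case 0
      have "rG 0 (rG (Suc 0) (unitv c)) = (\<lambda>_. 0)"
        by (rule LR_complex[OF G unitv_free]) (use c 0 in simp)
      then show ?thesis using Suc.IH 0 unfolding ok_def Cmod_def by (simp add: fun_eq_iff)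
    next
      case (Suc k')
      have "rG (Suc k') (rG (Suc (Suc k')) (unitv c)) = (\<lambda>_. 0)"
        by (rule LR_complex[OF G unitv_free]) (use c Suc in simp)
      then show ?thesis using Suc.IH Suc unfolding ok_def Cmod_def by (simp add: P_def mapM_zero)
    qed
    obtain v where v: "v \<in> free_elems bF (Suc k)" "?y = rF (Suc k) v"
      using LR_exact[OF F yfree ry] by blast
    have "mapM (bF k) (dF (Suc k)) (bF (Suc k)) (\<lambda>l. hc 1 (v l)) = mapM (bF k) (dF (Suc k)) (bF (Suc k)) v"
    proof (rule hom_preimage)
      fix j l assume "j < bF k" "l < bF (Suc k)" then show "homogeneous (dF (Suc k) j l) 1"
        using LR_homS[OF F] by simp
    next
      fix j assume j: "j < bF k"
      have "mapM (bF k) (dF (Suc k)) (bF (Suc k)) v j = ?y j" using v(2) by (simp add: res_map_mapM tgt_rank_def)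
      also have "\<dots> = (\<Sum>c'<bG k. phi k j c' * dG (Suc k) c' c)"
        using j by (simp add: P_def rG_unit[OF c] mapM_def)
      finally show "homogeneous (mapM (bF k) (dF (Suc k)) (bF (Suc k)) v j) (1 + 1)"
        using Suc.IH unfolding ok_def
        by (auto intro!: homogeneous_sum hom11 LR_homS[OF G] c)
    qed
    then have "colS k (phi k) c (\<lambda>l. hc 1 (v l))"
      unfolding colS_def using v(2) by (simp add: res_map_mapM tgt_rank_def homogeneous_hc P_def)
    then show ?thesis by blast
  qed
  have cols: "colS k (phi k) c (\<lambda>l. phi (Suc k) l c)" if "c < bG (Suc k)" for c
    using someI_ex[OF ex[OF that]] by simp
  show ?case unfolding ok_def Cmod_def
    using cols CS_from by (auto simp: colS_def)
qed

lemma C0: "rF 0 (P 0 g) = (\<lambda>j. if j < 1 then u * rG 0 g 0 else 0)"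
  using ok_all[of 0] unfolding ok_def Cmod_def by simp

lemma CS: "rF (Suc k) (P (Suc k) g) = P k (rG (Suc k) g)"
  using ok_all[of "Suc k"] unfolding ok_def Cmod_def by simp

lemma phi_hom: "c < bG k \<Longrightarrow> homogeneous (phi k l c) 1"
  using ok_all[of k] unfolding ok_def by simp

end


context cone
begin

definition bC :: "nat \<Rightarrow> nat" where "bC i = bF i + tgt_rank bG i"

primrec dC :: "nat \<Rightarrow> nat \<Rightarrow> nat \<Rightarrow> ('v,'k) mpoly" where
  "dC 0 = (\<lambda>j k. if k < bF 0 then dF 0 0 k else u)"
| "dC (Suc i) = (\<lambda>j k. if j < bF i then (if k < bF (Suc i) then dF (Suc i) j k else phi i j (k - bF (Suc i)))
                   else (if k < bF (Suc i) then 0 else - dG i (j - bF i) (k - bF (Suc i))))"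

abbreviation rC where "rC \<equiv> res_map bC dC"

lemma rC_0: "rC 0 (join (bF 0) f g) = (\<lambda>j. if j < 1 then rF 0 f 0 + u * g 0 else 0)"
  unfolding res_map_mapM
  by (simp add: mapM_def tgt_rank_def bC_def sum_split_lessThan join_def fun_eq_iff)

lemma rC_Suc: "rC (Suc i) (join (bF (Suc i)) f g) =
   join (bF i) (\<lambda>j. rF (Suc i) f j + P i g j) (\<lambda>c. - rG i g c)"
proof (rule ext)
  fix j
  have tC: "tgt_rank bC (Suc i) = bF i + tgt_rank bG i" by (simp add: tgt_rank_def bC_def)
  have bCS: "bC (Suc i) = bF (Suc i) + bG i" by (simp add: tgt_rank_def bC_def)
  show "rC (Suc i) (join (bF (Suc i)) f g) j = join (bF i) (\<lambda>j. rF (Suc i) f j + P i g j) (\<lambda>c. - rG i g c) j"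
  proof (cases "j < bF i")
    case True
    then show ?thesis unfolding res_map_mapM P_def tC bCS
      by (simp add: mapM_def tgt_rank_def sum_split_lessThan join_def)
  next
    case False
    then show ?thesis unfolding res_map_mapM P_def tC bCS
      by (auto simp: mapM_def tgt_rank_def sum_split_lessThan join_def sum_negf)
  qed
qed

lemma join_free_C: "f \<in> free_elems bF i \<Longrightarrow> (\<And>c. c \<ge> tgt_rank bG i \<Longrightarrow> g c = 0) \<Longrightarrow> join (bF i) f g \<in> free_elems bC i"
  by (auto simp: free_elems_def join_def bC_def)

lemma split_C:
  assumes "v \<in> free_elems bC i"
  obtains f g where "v = join (bF i) f g" "f \<in> free_elems bF i" "\<And>c. c \<ge> tgt_rank bG i \<Longrightarrow> g c = 0"
proof
  show "v = join (bF i) (\<lambda>k. if k < bF i then v k else 0) (\<lambda>c. v (bF i + c))" by (rule join_split)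
  show "(\<lambda>k. if k < bF i then v k else 0) \<in> free_elems bF i" by (simp add: free_elems_def)
  fix c assume "c \<ge> tgt_rank bG i" then show "v (bF i + c) = 0"
    using assms by (simp add: free_elems_def bC_def)
qed

lemma free_add: "f \<in> free_elems b i \<Longrightarrow> g \<in> free_elems b i \<Longrightarrow> (\<lambda>k. f k + g k) \<in> free_elems b i"
  by (simp add: free_elems_def)

lemma free_uminus: "f \<in> free_elems b i \<Longrightarrow> (\<lambda>k. - f k) \<in> free_elems b i"
  by (simp add: free_elems_def)

lemma rmap_add: "res_map b d i (\<lambda>k. f k + g k) = (\<lambda>j. res_map b d i f j + res_map b d i g j)"
  unfolding res_map_mapM by (rule mapM_add)

lemma rmap_uminus: "res_map b d i (\<lambda>k. - f k) = (\<lambda>j. - res_map b d i f j)"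
  unfolding res_map_mapM by (rule mapM_uminus)

lemma P_add: "P i (\<lambda>k. f k + g k) = (\<lambda>j. P i f j + P i g j)"
  unfolding P_def by (rule mapM_add)

lemma P_uminus: "P i (\<lambda>k. - f k) = (\<lambda>j. - P i f j)"
  unfolding P_def by (rule mapM_uminus)

lemma rmap_Suc_free: "res_map b d (Suc i) v \<in> free_elems b i"
  unfolding res_map_mapM by (rule mapM_free) (simp add: tgt_rank_def)

lemma image_sub_kernel:
  assumes v: "v \<in> free_elems bC (Suc i)"
  shows "rC i (rC (Suc i) v) = (\<lambda>_. 0)"
proof -
  obtain f g where fg: "v = join (bF (Suc i)) f g" "f \<in> free_elems bF (Suc i)" "\<And>c. c \<ge> tgt_rank bG (Suc i) \<Longrightarrow> g c = 0"
    using split_C[OF v] by blast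
  have gfree: "g \<in> free_elems bG i" using fg(3) by (simp add: free_elems_def tgt_rank_def)
  have w: "rC (Suc i) v = join (bF i) (\<lambda>j. rF (Suc i) f j + P i g j) (\<lambda>c. - rG i g c)"
    using fg(1) rC_Suc by simp
  show ?thesis
  proof (cases i)
    case 0
    have "rF 0 (\<lambda>j. rF (Suc 0) f j + P 0 g j) 0 = u * rG 0 g 0"
      using LR_complex[OF F fg(2)[unfolded 0]] C0[of g]
      by (simp add: rmap_add fun_eq_iff 0)
    moreover have "rC 0 (rC (Suc 0) v) = (\<lambda>j. if j < 1 then rF 0 (\<lambda>j. rF (Suc 0) f j + P 0 g j) 0 + u * (- rG 0 g 0) else 0)"
      using w 0 rC_0 by simp
    ultimately show ?thesis using 0 by (simp add: fun_eq_iff)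
  next
    case (Suc i')
    have a: "rF (Suc i') (\<lambda>j. rF (Suc (Suc i')) f j + P (Suc i') g j) = P i' (rG (Suc i') g)"
      using LR_complex[OF F fg(2)[unfolded Suc]] CS[of i' g] by (simp add: rmap_add fun_eq_iff Suc)
    have b: "P i' (\<lambda>c. - rG (Suc i') g c) = (\<lambda>j. - P i' (rG (Suc i') g) j)" by (rule P_uminus)
    have c: "rG i' (\<lambda>c. - rG (Suc i') g c) = (\<lambda>_. 0)"
      using LR_complex[OF G gfree[unfolded Suc]] by (simp add: rmap_uminus fun_eq_iff)
    have e: "rC i (rC (Suc i) v) = join (bF i') (\<lambda>j. rF (Suc i') (\<lambda>j. rF (Suc (Suc i')) f j + P (Suc i') g j) j
        + P i' (\<lambda>c. - rG (Suc i') g c) j) (\<lambda>c. - rG i' (\<lambda>c. - rG (Suc i') g c) c)"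
      using w Suc rC_Suc[of i'] by simp
    show ?thesis unfolding e by (simp add: a b c join_zero)
  qed
qed

lemma kernel_sub_image:
  assumes v: "v \<in> free_elems bC i" and rv: "rC i v = (\<lambda>_. 0)"
  shows "\<exists>w\<in>free_elems bC (Suc i). v = rC (Suc i) w"
proof -
  obtain f g where fg: "v = join (bF i) f g" "f \<in> free_elems bF i" "\<And>c. c \<ge> tgt_rank bG i \<Longrightarrow> g c = 0"
    using split_C[OF v] by blast
  obtain g' where g': "g' \<in> free_elems bG i" "g = rG i g'" and fz: "rF i (\<lambda>j. f j + P i g' j) = (\<lambda>_. 0)"
  proof (cases i)
    case 0
    have e0: "rF 0 f 0 + u * g 0 = 0" using rv fg(1) rC_0 0 by (metis less_one)
    have "g 0 * u = rF 0 (\<lambda>k. - f k) 0" using e0 by (simp add: rmap_uminus mult.commute eq_neg_iff_add_eq_0 add.commute)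
    then have "g 0 * u \<in> I" using LR_img[OF F] free_uminus[OF fg(2)] 0 by blast
    then have "g 0 \<in> J" using J by blast
    then obtain g' where g': "g' \<in> free_elems bG 0" "g 0 = rG 0 g' 0" using LR_img[OF G] by blast
    have geq: "g = rG 0 g'"
    proof
      fix c show "g c = rG 0 g' c"
        using g'(2) fg(3)[of c] 0 by (cases c) (simp_all add: res_map_def tgt_rank_def)
    qed
    have "rF 0 (\<lambda>j. f j + P 0 g' j) = (\<lambda>_. 0)"
    proof
      fix j show "rF 0 (\<lambda>j. f j + P 0 g' j) j = 0"
        using e0 geq C0[of g'] by (simp add: rmap_add res_map_def tgt_rank_def)
    qed
    then show ?thesis using that g'(1) geq 0 by blast
  next
    case (Suc i')
    have gfree: "g \<in> free_elems bG i'" using fg(3) Suc by (simp add: free_elems_def tgt_rank_def)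
    have r0: "join (bF i') (\<lambda>j. rF (Suc i') f j + P i' g j) (\<lambda>c. - rG i' g c) = (\<lambda>_. 0)"
      using rv fg(1) rC_Suc Suc by simp
    from join_eq_zero[OF r0] have z1: "\<And>j. j < bF i' \<Longrightarrow> rF (Suc i') f j + P i' g j = 0"
      and z2: "\<And>c. rG i' g c = 0" by auto
    have "rG i' g = (\<lambda>_. 0)" using z2 by auto
    then obtain g' where g': "g' \<in> free_elems bG (Suc i')" "g = rG (Suc i') g'"
      using LR_exact[OF G gfree] by blast
    have "rF (Suc i') (\<lambda>j. f j + P (Suc i') g' j) = (\<lambda>_. 0)"
    proof
      fix j
      have "rF (Suc i') (\<lambda>j. f j + P (Suc i') g' j) j = rF (Suc i') f j + P i' g j"
        using CS[of i' g'] g'(2) by (simp add: rmap_add)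
      also have "\<dots> = 0"
      proof (cases "j < bF i'")
        case True then show ?thesis using z1 by simp
      next
        case False then show ?thesis by (simp add: res_map_def tgt_rank_def P_def mapM_def)
      qed
      finally show "rF (Suc i') (\<lambda>j. f j + P (Suc i') g' j) j = 0" .
    qed
    then show ?thesis using that g' Suc by blast
  qed
  have f2free: "(\<lambda>j. f j + P i g' j) \<in> free_elems bF i" by (rule free_add[OF fg(2) P_free])
  obtain f' where f': "f' \<in> free_elems bF (Suc i)" "(\<lambda>j. f j + P i g' j) = rF (Suc i) f'"
    using LR_exact[OF F f2free fz] by blast
  let ?w = "join (bF (Suc i)) f' (\<lambda>c. - g' c)"
  have wfree: "?w \<in> free_elems bC (Suc i)"
    by (rule join_free_C[OF f'(1)]) (use g'(1) in \<open>simp add: free_elems_def tgt_rank_def\<close>)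
  have "rC (Suc i) ?w = join (bF i) (\<lambda>j. rF (Suc i) f' j + P i (\<lambda>c. - g' c) j) (\<lambda>c. - rG i (\<lambda>c. - g' c) c)"
    by (rule rC_Suc)
  also have "\<dots> = join (bF i) f g"
  proof (rule join_cong)
    fix k
    have "rF (Suc i) f' k = f k + P i g' k" using fun_cong[OF f'(2), of k] by simp
    then show "rF (Suc i) f' k + P i (\<lambda>c. - g' c) k = f k" by (simp add: P_uminus)
  next
    fix c show "- rG i (\<lambda>c. - g' c) c = g c" using g'(2) by (simp add: rmap_uminus)
  qed
  finally have "v = rC (Suc i) ?w" using fg(1) by simp
  with wfree show ?thesis by blast
qed

lemma cone_LR: "LR {p + r * u | p r. p \<in> I} t bC dC"
  unfolding LR_def
proof (intro conjI allI impI)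
  fix k assume "k < bC 0"
  then show "homogeneous (dC 0 0 k) t" using LR_hom0[OF F] hu by simp
next
  fix i j k :: nat assume i: "0 < i" and j: "j < tgt_rank bC i" and k: "k < bC i"
  obtain i' where i': "i = Suc i'" using i by (cases i) auto
  have j': "j < bF i' + tgt_rank bG i'" using j i' by (simp add: tgt_rank_def bC_def)
  have k': "k < bF (Suc i') + bG i'" using k i' by (simp add: tgt_rank_def bC_def)
  have hG: "homogeneous (dG i' (j - bF i') (k - bF (Suc i'))) 1" if "\<not> j < bF i'" "\<not> k < bF (Suc i')"
  proof (cases i')
    case 0
    then show ?thesis using LR_hom0[OF G] j' k' that by (simp add: tgt_rank_def)
  next
    case (Suc i'')
    then show ?thesis using LR_homS[OF G] j' k' that by (simp add: tgt_rank_def)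
  qed
  show "homogeneous (dC i j k) 1"
    using i' j' k' LR_homS[OF F, of j i' k] phi_hom[of "k - bF (Suc i')" i' j] hG
    by (auto simp: tgt_rank_def intro: homogeneous_uminus)
next
  show "(\<Union>v\<in>free_elems bC 0. {rC 0 v 0}) = {p + r * u | p r. p \<in> I}"
  proof (intro equalityI subsetI)
    fix x assume "x \<in> (\<Union>v\<in>free_elems bC 0. {rC 0 v 0})"
    then obtain v where v: "v \<in> free_elems bC 0" "x = rC 0 v 0" by blast
    obtain f g where fg: "v = join (bF 0) f g" "f \<in> free_elems bF 0" using split_C[OF v(1)] by blast
    have "x = rF 0 f 0 + g 0 * u" using v(2) fg(1) rC_0 by (simp add: mult.commute)
    moreover have "rF 0 f 0 \<in> I" using LR_img[OF F] fg(2) by blast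
    ultimately show "x \<in> {p + r * u | p r. p \<in> I}" by blast
  next
    fix x assume "x \<in> {p + r * u | p r. p \<in> I}"
    then obtain p r where pr: "x = p + r * u" "p \<in> I" by blast
    obtain f where f: "f \<in> free_elems bF 0" "p = rF 0 f 0" using LR_img[OF F] pr(2) by blast
    let ?v = "join (bF 0) f (\<lambda>c. if c = 0 then r else 0)"
    have "?v \<in> free_elems bC 0" by (rule join_free_C[OF f(1)]) (simp add: tgt_rank_def)
    moreover have "rC 0 ?v 0 = x" using pr(1) f(2) rC_0 by (simp add: mult.commute)
    ultimately show "x \<in> (\<Union>v\<in>free_elems bC 0. {rC 0 v 0})" by blast
  qed
next
  fix i
  show "{v \<in> free_elems bC i. rC i v = (\<lambda>_. 0)} = rC (Suc i) ` free_elems bC (Suc i)"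
  proof (intro equalityI subsetI)
    fix v assume "v \<in> {v \<in> free_elems bC i. rC i v = (\<lambda>_. 0)}"
    then show "v \<in> rC (Suc i) ` free_elems bC (Suc i)" using kernel_sub_image by blast
  next
    fix v assume "v \<in> rC (Suc i) ` free_elems bC (Suc i)"
    then obtain w where w: "w \<in> free_elems bC (Suc i)" "v = rC (Suc i) w" by blast
    show "v \<in> {v \<in> free_elems bC i. rC i v = (\<lambda>_. 0)}"
      using w rmap_Suc_free image_sub_kernel by blast
  qed
qed

end

lemma cone_thm:
  assumes "LR I t bF dF" "LR J 1 bG dG" "\<And>r. r \<in> J \<longleftrightarrow> r * u \<in> I" "homogeneous u t"
  shows "\<exists>b d. LR {p + r * u | p r. p \<in> I} t b d"
proof -
  interpret cone I t bF dF J bG dG u using assms by unfold_locales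
  show ?thesis using cone_LR by blast
qed


lemma dvd_single_iff: "(\<exists>h. n = Poly_Mapping.single s 1 + h) \<longleftrightarrow> 1 \<le> Poly_Mapping.lookup (n :: 'v \<Rightarrow>\<^sub>0 nat) s"
  unfolding dvd_exp_iff by (auto simp: lookup_single when_def)

lemma dvd_sq_iff:
  assumes "finite g" "finite u"
  shows "(\<exists>h. n + sqexp u = sqexp g + h) \<longleftrightarrow> g - u \<subseteq> Poly_Mapping.keys (n :: 'v \<Rightarrow>\<^sub>0 nat)"
  unfolding dvd_exp_iff using assms
  by (auto simp: lookup_sqexp lookup_add in_keys_iff split: if_splits)

lemma var_LR:
  fixes S :: "'v set"
  assumes "finite S"
  shows "\<exists>b d. LR (ideal_gen (monom ` (\<lambda>s. Poly_Mapping.single s 1) ` S) :: ('v,'k::comm_ring_1) mpoly set) 1 b d"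
  using assms
proof (induction S rule: finite_induct)
  case empty
  have "LR ({0}::('v,'k) mpoly set) 1 (\<lambda>_. 0) (\<lambda>_ _ _. 0)" by (rule LR_zero)
  then show ?case by (auto simp: ideal_gen_empty)
next
  case (insert s S)
  let ?M = "(\<lambda>s. Poly_Mapping.single s (1::nat)) ` S"
  let ?I = "ideal_gen (monom ` ?M) :: ('v,'k) mpoly set"
  let ?u = "monom (Poly_Mapping.single s 1) :: ('v,'k) mpoly"
  obtain b d where IH: "LR ?I 1 b d" using insert.IH by blast
  have finM: "finite ?M" using insert.hyps by simp
  have colon: "r \<in> ?I \<longleftrightarrow> r * ?u \<in> ?I" for r
  proof -
    have "r * ?u \<in> ?I \<longleftrightarrow> (\<forall>n\<in>Poly_Mapping.keys r. \<exists>g\<in>?M. \<exists>h. n + Poly_Mapping.single s 1 = g + h)"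
      by (rule colon_mem[OF finM])
    also have "\<dots> \<longleftrightarrow> (\<forall>n\<in>Poly_Mapping.keys r. \<exists>g\<in>?M. \<exists>h. n = g + h)"
    proof -
      have "(\<exists>h. n + Poly_Mapping.single s 1 = Poly_Mapping.single s' 1 + h) \<longleftrightarrow> (\<exists>h. n = Poly_Mapping.single s' 1 + h)"
        if "s' \<in> S" for n :: "'v \<Rightarrow>\<^sub>0 nat" and s'
      proof -
        have "s' \<noteq> s" using that insert.hyps by auto
        then show ?thesis using dvd_single_iff[of "n + Poly_Mapping.single s (1::nat)" s'] dvd_single_iff[of n s']
          by (simp add: lookup_add lookup_single)
      qed
      then show ?thesis by blast
    qed
    also have "\<dots> \<longleftrightarrow> r \<in> ?I" by (rule monom_ideal_mem[OF finM, symmetric])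
    finally show ?thesis by simp
  qed
  have hu: "homogeneous ?u 1" using homogeneous_monom[of "Poly_Mapping.single s 1"] by (simp add: mdeg_single)
  obtain b' d' where LR': "LR {p + r * ?u | p r. p \<in> ?I} 1 b' d'"
    using cone_thm[OF IH IH colon hu] by blast
  have notin: "?u \<notin> monom ` ?M"
  proof
    assume "?u \<in> monom ` ?M"
    then obtain s' where "s' \<in> S" "?u = monom (Poly_Mapping.single s' 1)" by auto
    then have "Poly_Mapping.single s (1::nat) = Poly_Mapping.single s' 1"
      using inj_monom[where 'k='k] by (auto dest: injD)
    then have "s = s'" by (metis lookup_single_eq lookup_single_not_eq zero_neq_one)
    then show False using \<open>s' \<in> S\<close> insert.hyps by simp
  qed
  have "ideal_gen (monom ` (\<lambda>s. Poly_Mapping.single s 1) ` insert s S) = ideal_gen (insert ?u (monom ` ?M))"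
    by simp
  also have "\<dots> = {p + r * ?u | p r. p \<in> ?I}" by (rule ideal_gen_insert) (use finM notin in auto)
  finally have eq: "ideal_gen (monom ` (\<lambda>s. Poly_Mapping.single s 1) ` insert s S) = {p + r * ?u | p r. p \<in> ?I}" .
  show ?case unfolding eq using LR' by blast
qed

lemma LQ_LR:
  fixes M :: "'v set set" and key :: "'v set \<Rightarrow> nat"
  assumes "finite M" and "\<forall>S\<in>M. finite S \<and> card S = t" and "inj_on key M"
    and "\<forall>u\<in>M. \<exists>S. finite S \<and> (\<forall>A. (\<exists>g\<in>M. key u < key g \<and> g - u \<subseteq> A) \<longleftrightarrow> A \<inter> S \<noteq> {})"
  shows "\<exists>b d. LR (ideal_gen (sqfree_monom ` M) :: ('v,'k::comm_ring_1) mpoly set) t b d"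
  using assms
proof (induction "card M" arbitrary: M rule: less_induct)
  case less
  show ?case
  proof (cases "M = {}")
    case True
    have "LR ({0}::('v,'k) mpoly set) t (\<lambda>_. 0) (\<lambda>_ _ _. 0)" by (rule LR_zero)
    then show ?thesis using True by (auto simp: ideal_gen_empty)
  next
    case False
    define u where "u = (ARG_MIN key x. x \<in> M)"
    have uM: "u \<in> M" and umin: "\<And>g. g \<in> M \<Longrightarrow> key u \<le> key g"
      using arg_min_nat_lemma[of "\<lambda>x. x \<in> M" _ key] False unfolding u_def by auto
    define M' where "M' = M - {u}"
    have prev: "g \<in> M' \<longleftrightarrow> g \<in> M \<and> key u < key g" for g
    proof
      assume g: "g \<in> M'"
      then have gM: "g \<in> M" "g \<noteq> u" by (auto simp: M'_def)
      have "key g \<noteq> key u" using inj_onD[OF less.prems(3) _ gM(1) uM] gM(2) by blast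
      then show "g \<in> M \<and> key u < key g" using umin[OF gM(1)] gM(1) by linarith
    next
      assume "g \<in> M \<and> key u < key g"
      then show "g \<in> M'" by (auto simp: M'_def)
    qed
    have prev2: "g \<in> M \<and> key u' < key g \<longleftrightarrow> g \<in> M' \<and> key u' < key g" if "u' \<in> M'" for u' g
    proof -
      have "key u < key u'" using that prev by blast
      then show ?thesis using prev[of g] by (auto simp: M'_def)
    qed
    have cardM': "card M' < card M" unfolding M'_def by (rule card_Diff1_less[OF less.prems(1) uM])
    have "\<exists>b d. LR (ideal_gen (sqfree_monom ` M') :: ('v,'k) mpoly set) t b d"
    proof (rule less.hyps[OF cardM'])
      show "finite M'" using less.prems(1) by (simp add: M'_def)
      show "\<forall>S\<in>M'. finite S \<and> card S = t" using less.prems(2) by (simp add: M'_def)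
      show "inj_on key M'" using less.prems(3) by (auto simp: M'_def intro: inj_on_subset)
      show "\<forall>u\<in>M'. \<exists>S. finite S \<and> (\<forall>A. (\<exists>g\<in>M'. key u < key g \<and> g - u \<subseteq> A) \<longleftrightarrow> A \<inter> S \<noteq> {})"
      proof
        fix u' assume u': "u' \<in> M'"
        then have "u' \<in> M" by (simp add: M'_def)
        then have "\<exists>S. finite S \<and> (\<forall>A. (\<exists>g\<in>M. key u' < key g \<and> g - u' \<subseteq> A) \<longleftrightarrow> A \<inter> S \<noteq> {})"
          by (rule bspec[OF less.prems(4)])
        then obtain S where S12: "finite S \<and> (\<forall>A. (\<exists>g\<in>M. key u' < key g \<and> g - u' \<subseteq> A) \<longleftrightarrow> A \<inter> S \<noteq> {})"
          by (elim exE)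
        then have S1: "finite S" and S2: "\<And>A. (\<exists>g\<in>M. key u' < key g \<and> g - u' \<subseteq> A) \<longleftrightarrow> A \<inter> S \<noteq> {}"
          by auto
        have eqv: "(\<exists>g\<in>M'. key u' < key g \<and> g - u' \<subseteq> A) \<longleftrightarrow> (\<exists>g\<in>M. key u' < key g \<and> g - u' \<subseteq> A)" for A
        proof
          assume "\<exists>g\<in>M'. key u' < key g \<and> g - u' \<subseteq> A"
          then obtain g where "g \<in> M'" "key u' < key g" "g - u' \<subseteq> A" by blast
          then show "\<exists>g\<in>M. key u' < key g \<and> g - u' \<subseteq> A" using prev2[OF u', of g] by blast
        next
          assume "\<exists>g\<in>M. key u' < key g \<and> g - u' \<subseteq> A"
          then obtain g where "g \<in> M" "key u' < key g" "g - u' \<subseteq> A" by blast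
          then show "\<exists>g\<in>M'. key u' < key g \<and> g - u' \<subseteq> A" using prev2[OF u', of g] by blast
        qed
        show "\<exists>S. finite S \<and> (\<forall>A. (\<exists>g\<in>M'. key u' < key g \<and> g - u' \<subseteq> A) \<longleftrightarrow> A \<inter> S \<noteq> {})"
          using S1 S2 eqv by (intro exI[of _ S]) simp
      qed
    qed
    then obtain bF dF where IH: "LR (ideal_gen (sqfree_monom ` M') :: ('v,'k) mpoly set) t bF dF" by blast
    have "\<exists>S. finite S \<and> (\<forall>A. (\<exists>g\<in>M. key u < key g \<and> g - u \<subseteq> A) \<longleftrightarrow> A \<inter> S \<noteq> {})"
      by (rule bspec[OF less.prems(4) uM])
    then obtain S where S12: "finite S \<and> (\<forall>A. (\<exists>g\<in>M. key u < key g \<and> g - u \<subseteq> A) \<longleftrightarrow> A \<inter> S \<noteq> {})"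
      by (elim exE)
    then have S: "finite S" "\<forall>A. (\<exists>g\<in>M. key u < key g \<and> g - u \<subseteq> A) \<longleftrightarrow> A \<inter> S \<noteq> {}"
      by auto
    have S': "(\<exists>g\<in>M'. g - u \<subseteq> A) \<longleftrightarrow> A \<inter> S \<noteq> {}" for A
    proof -
      have "(\<exists>g\<in>M'. g - u \<subseteq> A) \<longleftrightarrow> (\<exists>g\<in>M. key u < key g \<and> g - u \<subseteq> A)"
        using prev by blast
      then show ?thesis using S(2) by simp
    qed
    obtain bG dG where G: "LR (ideal_gen (monom ` (\<lambda>s. Poly_Mapping.single s 1) ` S) :: ('v,'k) mpoly set) 1 bG dG"
      using var_LR[OF S(1)] by blast
    have finu: "finite u" and cardu: "card u = t" using less.prems(2) uM by auto
    have finM': "finite (sqexp ` M')" using less.prems(1) by (simp add: M'_def)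
    have sqM': "sqfree_monom ` M' = monom ` sqexp ` M'" by (auto simp: sqfree_monom_eq)
    have colon: "r \<in> ideal_gen (monom ` (\<lambda>s. Poly_Mapping.single s 1) ` S) \<longleftrightarrow>
        r * sqfree_monom u \<in> ideal_gen (sqfree_monom ` M')" for r :: "('v,'k) mpoly"
    proof -
      have "r * sqfree_monom u \<in> ideal_gen (sqfree_monom ` M') \<longleftrightarrow>
          (\<forall>n\<in>Poly_Mapping.keys r. \<exists>g\<in>sqexp ` M'. \<exists>h. n + sqexp u = g + h)"
        unfolding sqM' sqfree_monom_eq by (rule colon_mem[OF finM'])
      also have "\<dots> \<longleftrightarrow> (\<forall>n\<in>Poly_Mapping.keys r. \<exists>g\<in>M'. g - u \<subseteq> Poly_Mapping.keys n)"
      proof -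
        have "g \<in> M' \<Longrightarrow> (\<exists>h. n + sqexp u = sqexp g + h) \<longleftrightarrow> g - u \<subseteq> Poly_Mapping.keys n" for g n
          using dvd_sq_iff[OF _ finu] less.prems(2) by (auto simp: M'_def)
        then show ?thesis by auto
      qed
      also have "\<dots> \<longleftrightarrow> (\<forall>n\<in>Poly_Mapping.keys r. Poly_Mapping.keys n \<inter> S \<noteq> {})" using S' by blast
      also have "\<dots> \<longleftrightarrow> (\<forall>n\<in>Poly_Mapping.keys r. \<exists>s\<in>S. \<exists>h. n = Poly_Mapping.single s 1 + h)"
      proof -
        have hk: "(Poly_Mapping.keys n \<inter> S \<noteq> {}) \<longleftrightarrow> (\<exists>s\<in>S. 1 \<le> Poly_Mapping.lookup n s)" for n :: "'v \<Rightarrow>\<^sub>0 nat"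
          by (auto simp: in_keys_iff Suc_le_eq)
        show ?thesis unfolding dvd_single_iff using hk by simp
      qed
      also have "\<dots> \<longleftrightarrow> r \<in> ideal_gen (monom ` (\<lambda>s. Poly_Mapping.single s 1) ` S)"
        using monom_ideal_mem[of "(\<lambda>s. Poly_Mapping.single s (1::nat)) ` S" r] S(1) by simp
      finally show ?thesis by simp
    qed
    have hu: "homogeneous (sqfree_monom u :: ('v,'k) mpoly) t"
      using homogeneous_monom[of "sqexp u"] mdeg_sqexp[OF finu] cardu by (simp add: sqfree_monom_eq)
    have LR': "\<exists>b d. LR {p + r * sqfree_monom u | p r. p \<in> (ideal_gen (sqfree_monom ` M') :: ('v,'k) mpoly set)} t b d"
      by (rule cone_thm[OF IH G colon hu])
    have notin: "(sqfree_monom u :: ('v,'k) mpoly) \<notin> sqfree_monom ` M'"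
    proof
      assume "(sqfree_monom u :: ('v,'k) mpoly) \<in> sqfree_monom ` M'"
      then obtain g where g: "g \<in> M'" "(sqfree_monom u :: ('v,'k) mpoly) = sqfree_monom g" by auto
      then have "sqexp u = sqexp g" using inj_monom[where 'k='k] by (auto simp: sqfree_monom_eq dest: injD)
      then have "u = g" using sqexp_inj finu less.prems(2) g(1) by (auto simp: M'_def)
      then show False using g(1) by (simp add: M'_def)
    qed
    have Meq: "M = insert u M'" using uM by (auto simp: M'_def)
    have "ideal_gen (sqfree_monom ` M) = ideal_gen (insert (sqfree_monom u) (sqfree_monom ` M') :: ('v,'k) mpoly set)"
      by (simp add: Meq)
    also have "\<dots> = {p + r * sqfree_monom u | p r. p \<in> (ideal_gen (sqfree_monom ` M') :: ('v,'k) mpoly set)}"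
      by (rule ideal_gen_insert) (use less.prems(1) notin in \<open>auto simp: M'_def\<close>)
    finally have eq: "(ideal_gen (sqfree_monom ` M) :: ('v,'k) mpoly set) = {p + r * sqfree_monom u | p r. p \<in> (ideal_gen (sqfree_monom ` M') :: ('v,'k) mpoly set)}" .
    show ?thesis unfolding eq by (rule LR')
  qed
qed


definition keyq :: "('v \<Rightarrow> nat) \<Rightarrow> 'v set \<Rightarrow> nat" where
  "keyq q S = (\<Sum>v\<in>S. 2 ^ q v)"

lemma sum_pow2_lessThan: "(\<Sum>k<n. (2::nat) ^ k) < 2 ^ n"
  by (induction n) auto

lemma sum_pow2_lt:
  assumes "finite A" "inj_on q A" "\<forall>x\<in>A. q x < n"
  shows "(\<Sum>x\<in>A. (2::nat) ^ q x) < 2 ^ n"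
proof -
  have "(\<Sum>x\<in>A. (2::nat) ^ q x) = (\<Sum>k\<in>q ` A. 2 ^ k)"
    using sum.reindex[OF assms(2), of "\<lambda>k. (2::nat) ^ k"] by simp
  also have "\<dots> \<le> (\<Sum>k<n. 2 ^ k)"
    by (rule sum_mono2) (use assms in auto)
  also have "\<dots> < 2 ^ n" by (rule sum_pow2_lessThan)
  finally show ?thesis .
qed

lemma keyq_split: "finite g \<Longrightarrow> keyq q g = keyq q (g \<inter> u) + keyq q (g - u)"
  unfolding keyq_def by (rule sum.Int_Diff)

lemma key_gt:
  assumes fin: "finite g" "finite u" and inj: "inj q" and a: "a \<in> g - u"
    and amax: "\<forall>x\<in>(g - u) \<union> (u - g). q x \<le> q a"
  shows "keyq q u < keyq q g"
proof -
  have "keyq q (u - g) < 2 ^ q a"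
    unfolding keyq_def
  proof (rule sum_pow2_lt)
    show "finite (u - g)" using fin by simp
    show "inj_on q (u - g)" using inj by (auto intro: inj_on_subset)
    show "\<forall>x\<in>u - g. q x < q a"
    proof
      fix x assume x: "x \<in> u - g"
      have le: "q x \<le> q a" using amax x by blast
      have "x \<noteq> a" using a x by blast
      then have "q x \<noteq> q a" using injD[OF inj] by blast
      then show "q x < q a" using le by linarith
    qed
  qed
  also have "\<dots> \<le> keyq q (g - u)"
    unfolding keyq_def using a fin by (intro member_le_sum) auto
  finally have "keyq q (u - g) < keyq q (g - u)" .
  then show "keyq q u < keyq q g"
    using keyq_split[OF fin(1), of q u] keyq_split[OF fin(2), of q g] by (simp add: Int_commute)
qed

lemma max_exists:
  fixes q :: "'v \<Rightarrow> nat"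
  assumes "finite g" "finite u" "g \<noteq> u"
  shows "\<exists>a\<in>(g - u) \<union> (u - g). \<forall>x\<in>(g - u) \<union> (u - g). q x \<le> q a"
proof -
  let ?D = "(g - u) \<union> (u - g)"
  have Dne: "?D \<noteq> {}" using assms(3) by auto
  have Dfin: "finite ?D" using assms by auto
  have "Max (q ` ?D) \<in> q ` ?D" using Dfin Dne by (intro Max_in) auto
  then obtain a where a1': "Max (q ` ?D) = q a" "a \<in> ?D" by (rule imageE)
  have "\<forall>x\<in>?D. q x \<le> q a" unfolding a1'(1)[symmetric] using Dfin by (intro ballI Max_ge) auto
  then show ?thesis using a1'(2) by blast
qed

lemma key_less_max:
  assumes fin: "finite g" "finite u" and inj: "inj q" and lt: "keyq q u < keyq q g"
  shows "\<exists>a\<in>g - u. \<forall>x\<in>(g - u) \<union> (u - g). q x \<le> q a"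
proof -
  have "g \<noteq> u" using lt by auto
  then obtain a where a: "a \<in> (g - u) \<union> (u - g)" "\<forall>x\<in>(g - u) \<union> (u - g). q x \<le> q a"
    using max_exists[OF fin] by blast
  show ?thesis
  proof (cases "a \<in> g - u")
    case True then show ?thesis using a by blast
  next
    case False
    then have "a \<in> u - g" using a by blast
    moreover have "\<forall>x\<in>(u - g) \<union> (g - u). q x \<le> q a" using a(2) by blast
    ultimately have "keyq q g < keyq q u" by (rule key_gt[OF fin(2,1) inj])
    then show ?thesis using lt by simp
  qed
qed

lemma keyq_inj:
  assumes "inj q" "finite g" "finite u" "keyq q g = keyq q u"
  shows "g = u"
proof (rule ccontr)
  assume ne: "g \<noteq> u"
  then obtain a where a: "a \<in> (g - u) \<union> (u - g)" "\<forall>x\<in>(g - u) \<union> (u - g). q x \<le> q a"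
    using max_exists[OF assms(2,3)] by blast
  show False
  proof (cases "a \<in> g - u")
    case True
    have "keyq q u < keyq q g" by (rule key_gt[OF assms(2,3,1) True a(2)])
    then show False using assms(4) by simp
  next
    case False
    then have "a \<in> u - g" using a by blast
    moreover have "\<forall>x\<in>(u - g) \<union> (g - u). q x \<le> q a" using a(2) by blast
    ultimately have "keyq q g < keyq q u" by (rule key_gt[OF assms(3,2,1)])
    then show False using assms(4) by simp
  qed
qed

lemma mem_CH_compl: "S \<in> CH_compl t E \<longleftrightarrow> finite S \<and> card S = t \<and> \<not> is_clique E S"
  by (auto simp: CH_compl_def CH_def)

lemma LQ_noncliques:
  fixes E :: "'v::finite \<Rightarrow> 'v \<Rightarrow> bool" and q :: "'v \<Rightarrow> nat"
  assumes inj: "inj q"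
    and peo: "\<And>a w1 w2. E a w1 \<Longrightarrow> E a w2 \<Longrightarrow> q w1 < q a \<Longrightarrow> q w2 < q a \<Longrightarrow> w1 \<noteq> w2 \<Longrightarrow> E w1 w2"
  shows "\<forall>u\<in>CH_compl t E. \<exists>S. finite S \<and>
     (\<forall>A. (\<exists>g\<in>CH_compl t E. keyq q u < keyq q g \<and> g - u \<subseteq> A) \<longleftrightarrow> A \<inter> S \<noteq> {})"
proof
  fix u assume uM: "u \<in> CH_compl t E"
  let ?M = "CH_compl t E"
  let ?S = "{s. \<exists>g\<in>?M. keyq q u < keyq q g \<and> g - u = {s}}"
  have main: "\<exists>s\<in>?S. s \<in> g - u" if gM: "g \<in> ?M" and gl: "keyq q u < keyq q g" for g
  proof -
    have fu: "finite u" "card u = t" "\<not> is_clique E u" using uM by (auto simp: mem_CH_compl)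
    have fg: "finite g" "card g = t" "\<not> is_clique E g" using gM by (auto simp: mem_CH_compl)
    obtain a where a: "a \<in> g - u" "\<forall>x\<in>(g - u) \<union> (u - g). q x \<le> q a"
      using key_less_max[OF fg(1) fu(1) inj gl] by blast
    have big_in_g: "x \<in> g" if "x \<in> u" "q a < q x" for x
    proof (rule ccontr)
      assume "x \<notin> g"
      then have "q x \<le> q a" using a(2) that(1) by blast
      then show False using that(2) by simp
    qed
    have qne: "q x \<noteq> q a" if "x \<in> u" for x
    proof
      assume "q x = q a" then have "x = a" by (rule injD[OF inj])
      then show False using a(1) that by simp
    qed
    let ?U = "{w\<in>u. q w < q a}"
    have "\<exists>w\<in>?U. \<not> is_clique E (insert a (u - {w}))"
    proof (rule ccontr)
      assume H: "\<not> (\<exists>w\<in>?U. \<not> is_clique E (insert a (u - {w})))"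
      show False
      proof (cases "?U = {}")
        case True
        have "u \<subseteq> g"
        proof
          fix x assume x: "x \<in> u"
          then have "\<not> q x < q a" using True by blast
          then have "q a < q x" using qne[OF x] by linarith
          then show "x \<in> g" using big_in_g x by blast
        qed
        then have "u = g" using fg fu by (simp add: card_subset_eq)
        then show False using a(1) by simp
      next
        case False
        then obtain w where w: "w \<in> ?U" by blast
        show False
        proof (cases "?U = {w}")
          case True
          have sub: "insert a (u - {w}) \<subseteq> g"
          proof
            fix x assume "x \<in> insert a (u - {w})"
            then consider "x = a" | "x \<in> u" "x \<noteq> w" by blast
            then show "x \<in> g"
            proof cases
              case 1 then show ?thesis using a by simp
            next
              case 2
              then have "x \<notin> ?U" using True by blast
              then have "\<not> q x < q a" using 2 by simp
              then have "q a < q x" using qne[OF 2(1)] by linarith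
              then show ?thesis using big_in_g 2 by blast
            qed
          qed
          have "t > 0" using fu(1,2) w card_gt_0_iff by blast
          then have "card (insert a (u - {w})) = t"
            using w fu a(1) by (simp add: card_insert_if)
          then have "insert a (u - {w}) = g" using sub fg by (simp add: card_subset_eq)
          then show False using H w fg(3) by auto
        next
          case False
          then obtain w' where w': "w' \<in> ?U" "w' \<noteq> w" using w by blast
          have "is_clique E u"
            unfolding is_clique_def
          proof (intro ballI impI)
            fix x y assume xy: "x \<in> u" "y \<in> u" "x \<noteq> y"
            show "E x y"
            proof (cases "\<exists>z\<in>?U. z \<noteq> x \<and> z \<noteq> y")
              case True
              then obtain z where z: "z \<in> ?U" "z \<noteq> x" "z \<noteq> y" by blast
              then have "is_clique E (insert a (u - {z}))" using H by blast
              then show ?thesis using xy z unfolding is_clique_def by blast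
            next
              case False
              then have F: "\<And>z. z \<in> ?U \<Longrightarrow> z = x \<or> z = y" by blast
              have xU: "x \<in> ?U" using F[OF w] F[OF w'(1)] w w' by auto
              have yU: "y \<in> ?U" using F[OF w] F[OF w'(1)] w w' by auto
              have ax: "a \<noteq> x" "a \<noteq> y" using a(1) xy by auto
              have "is_clique E (insert a (u - {x}))" using H xU by blast
              then have e1: "E a y" using xy ax unfolding is_clique_def by blast
              have "is_clique E (insert a (u - {y}))" using H yU by blast
              then have e2: "E a x" using xy ax unfolding is_clique_def by blast
              show ?thesis using peo[OF e2 e1] xU yU xy(3) by simp
            qed
          qed
          then show False using fu(3) by simp
        qed
      qed
    qed
    then obtain w where w: "w \<in> u" "q w < q a" "\<not> is_clique E (insert a (u - {w}))" by blast
    let ?g = "insert a (u - {w})"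
    have "t > 0" using fu(1,2) w card_gt_0_iff by blast
    then have gM': "?g \<in> ?M"
      using w fu a(1) by (simp add: mem_CH_compl card_insert_if)
    have "keyq q ?g = 2 ^ q a + keyq q (u - {w})"
      using fu a(1) unfolding keyq_def by (simp add: sum.insert_if)
    moreover have "keyq q u = 2 ^ q w + keyq q (u - {w})"
      using fu w unfolding keyq_def by (simp add: sum.remove)
    moreover have "(2::nat) ^ q w < 2 ^ q a" using w(2) by simp
    ultimately have "keyq q u < keyq q ?g" by simp
    moreover have "?g - u = {a}" using a(1) by auto
    ultimately have "\<exists>g\<in>?M. keyq q u < keyq q g \<and> g - u = {a}" using gM' by blast
    then have "a \<in> ?S" by simp
    then show ?thesis using a(1) by blast
  qed
  show "\<exists>S. finite S \<and> (\<forall>A. (\<exists>g\<in>?M. keyq q u < keyq q g \<and> g - u \<subseteq> A) \<longleftrightarrow> A \<inter> S \<noteq> {})"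
  proof (intro exI conjI allI)
    show "finite ?S" by simp
    fix A
    show "(\<exists>g\<in>?M. keyq q u < keyq q g \<and> g - u \<subseteq> A) \<longleftrightarrow> A \<inter> ?S \<noteq> {}"
    proof
      assume "\<exists>g\<in>?M. keyq q u < keyq q g \<and> g - u \<subseteq> A"
      then obtain g where g: "g \<in> ?M" "keyq q u < keyq q g" "g - u \<subseteq> A" by blast
      obtain s where s: "s \<in> ?S" "s \<in> g - u" using main[OF g(1,2)] by blast
      then have "s \<in> A" using g(3) by blast
      then show "A \<inter> ?S \<noteq> {}" using s(1) by blast
    next
      assume "A \<inter> ?S \<noteq> {}"
      then obtain s where s: "s \<in> A" "s \<in> ?S" by blast
      then obtain g where g: "g \<in> ?M" "keyq q u < keyq q g" "g - u = {s}" by blast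
      have "g - u \<subseteq> A" using g(3) s(1) by simp
      then show "\<exists>g\<in>?M. keyq q u < keyq q g \<and> g - u \<subseteq> A" using g(1,2) by blast
    qed
  qed
qed


locale sgraph =
  fixes E :: "'v \<Rightarrow> 'v \<Rightarrow> bool"
  assumes sym: "E x y \<Longrightarrow> E y x" and irr: "\<not> E x x"
begin

definition Rw :: "'v set \<Rightarrow> 'v \<Rightarrow> 'v \<Rightarrow> bool" where
  "Rw W x y \<longleftrightarrow> E x y \<and> x \<in> W \<and> y \<in> W"

abbreviation reach :: "'v set \<Rightarrow> 'v \<Rightarrow> 'v \<Rightarrow> bool" where
  "reach W \<equiv> (Rw W)\<^sup>*\<^sup>*"

lemma reach_sym: "reach W x y \<Longrightarrow> reach W y x"
proof (induction rule: rtranclp_induct)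
  case base then show ?case by simp
next
  case (step y z)
  then have "Rw W z y" by (auto simp: Rw_def sym)
  then show ?case using step.IH by (rule converse_rtranclp_into_rtranclp)
qed

lemma reach_mem: "reach W x y \<Longrightarrow> x \<in> W \<Longrightarrow> y \<in> W"
  by (induction rule: rtranclp_induct) (auto simp: Rw_def)

lemma reach_step: "reach W x y \<Longrightarrow> E y z \<Longrightarrow> y \<in> W \<Longrightarrow> z \<in> W \<Longrightarrow> reach W x z"
  by (rule rtranclp.rtrancl_into_rtrancl) (auto simp: Rw_def)

lemma reach_walk:
  assumes "reach C c1 c2" "c1 \<in> C"
  shows "\<exists>n p. p 0 = c1 \<and> p n = c2 \<and> (\<forall>k<n. E (p k) (p (Suc k))) \<and> (\<forall>k\<le>n. p k \<in> C)"
  using assms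
proof (induction rule: rtranclp_induct)
  case base
  show ?case by (rule exI[of _ 0], rule exI[of _ "\<lambda>_. c1"]) (use base in simp)
next
  case (step y z)
  then obtain n p where p: "p 0 = c1" "p n = y" "\<forall>k<n. E (p k) (p (Suc k))" "\<forall>k\<le>n. p k \<in> C" by blast
  let ?p = "p(Suc n := z)"
  have "?p 0 = c1" "?p (Suc n) = z" using p by auto
  moreover have "\<forall>k<Suc n. E (?p k) (?p (Suc k))"
  proof (intro allI impI)
    fix k assume "k < Suc n"
    then consider "k < n" | "k = n" by linarith
    then show "E (?p k) (?p (Suc k))"
    proof cases
      case 1 then show ?thesis using p(3) by simp
    next
      case 2 then show ?thesis using p(2) step(2) by (simp add: Rw_def)
    qed
  qed
  moreover have "\<forall>k\<le>Suc n. ?p k \<in> C" using p(4) step(2) by (auto simp: Rw_def le_Suc_eq)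
  ultimately show ?case by blast
qed

definition W :: "'v \<Rightarrow> 'v \<Rightarrow> 'v set \<Rightarrow> nat \<Rightarrow> (nat \<Rightarrow> 'v) \<Rightarrow> bool" where
  "W x y C N q \<longleftrightarrow> q 0 = x \<and> q N = y \<and> (\<forall>k<N. E (q k) (q (Suc k))) \<and> (\<forall>k. 0 < k \<longrightarrow> k < N \<longrightarrow> q k \<in> C)"

lemma shortcut:
  assumes w: "W x y C N q" and id: "i + 1 + d \<le> N" and d: "1 \<le> d" and e: "E (q i) (q (i + 1 + d))"
  shows "W x y C (N - d) (\<lambda>k. if k \<le> i then q k else q (k + d))"
  unfolding W_def
proof (intro conjI allI impI)
  let ?q = "\<lambda>k. if k \<le> i then q k else q (k + d)"
  show "?q 0 = x" using w by (simp add: W_def)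
  have "\<not> N - d \<le> i" "N - d + d = N" using id d by linarith+
  then show "?q (N - d) = y" using w by (simp add: W_def)
  fix k
  show "k < N - d \<Longrightarrow> E (?q k) (?q (Suc k))"
  proof -
    assume k: "k < N - d"
    consider "k < i" | "k = i" | "k > i" by linarith
    then show ?thesis
    proof cases
      case 1 then show ?thesis using w id by (simp add: W_def)
    next
      case 2 then show ?thesis using e by (simp add: add.commute)
    next
      case 3 then show ?thesis using w k by (simp add: W_def)
    qed
  qed
  show "0 < k \<Longrightarrow> k < N - d \<Longrightarrow> ?q k \<in> C"
    using w id d unfolding W_def by (cases "k \<le> i") auto
qed

definition IP :: "nat \<Rightarrow> (nat \<Rightarrow> 'v) \<Rightarrow> 'v \<Rightarrow> 'v \<Rightarrow> 'v set \<Rightarrow> bool" where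
  "IP n p x y C \<longleftrightarrow> p 0 = x \<and> p n = y \<and> 2 \<le> n \<and> (\<forall>k. 0 < k \<longrightarrow> k < n \<longrightarrow> p k \<in> C) \<and>
     (\<forall>i\<le>n. \<forall>j\<le>n. E (p i) (p j) \<longleftrightarrow> (j = Suc i \<or> i = Suc j)) \<and> inj_on p {..n}"

lemma induced_path:
  assumes xy: "x \<noteq> y" "\<not> E x y" "x \<notin> C" "y \<notin> C"
    and c: "c1 \<in> C" "E x c1" "c2 \<in> C" "E c2 y" "reach C c1 c2"
  shows "\<exists>n p. IP n p x y C"
proof -
  obtain m p where p: "p 0 = c1" "p m = c2" "\<forall>k<m. E (p k) (p (Suc k))" "\<forall>k\<le>m. p k \<in> C"
    using reach_walk[OF c(5,1)] by blast
  let ?q = "\<lambda>k. if k = 0 then x else if k \<le> m + 1 then p (k - 1) else y"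
  have "W x y C (m + 2) ?q"
    unfolding W_def
  proof (intro conjI allI impI)
    show "?q 0 = x" by simp
    show "?q (m + 2) = y" by simp
    fix k
    show "k < m + 2 \<Longrightarrow> E (?q k) (?q (Suc k))"
    proof -
      assume k: "k < m + 2"
      consider "k = 0" | "0 < k" "k \<le> m" | "k = m + 1" using k by linarith
      then show ?thesis
      proof cases
        case 1 then show ?thesis using p(1) c(2) by simp
      next
        case 2
        then have "E (p (k - 1)) (p k)" using p(3)[rule_format, of "k - 1"] by simp
        then show ?thesis using 2 by simp
      next
        case 3 then show ?thesis using p(2) c(4) by simp
      qed
    qed
    show "0 < k \<Longrightarrow> k < m + 2 \<Longrightarrow> ?q k \<in> C" using p(4) by auto
  qed
  then have ex: "\<exists>N q. W x y C N q" by blast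
  define N where "N = (LEAST N. \<exists>q. W x y C N q)"
  obtain q where q: "W x y C N q" unfolding N_def using LeastI_ex[OF ex] by blast
  have minN: "\<And>N' q'. W x y C N' q' \<Longrightarrow> N \<le> N'"
    unfolding N_def by (rule Least_le) blast
  have noshort: "\<not> E (q i) (q (i + 1 + d))" if "i + 1 + d \<le> N" "1 \<le> d" for i d
  proof
    assume "E (q i) (q (i + 1 + d))"
    from shortcut[OF q that this] have "N \<le> N - d" using minN by blast
    then show False using that by linarith
  qed
  have q0: "q 0 = x" and qN: "q N = y" and qe: "\<And>k. k < N \<Longrightarrow> E (q k) (q (Suc k))"
    and qC: "\<And>k. 0 < k \<Longrightarrow> k < N \<Longrightarrow> q k \<in> C" using q unfolding W_def by auto
  have N2: "2 \<le> N"
  proof (rule ccontr)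
    assume "\<not> 2 \<le> N"
    then consider "N = 0" | "N = 1" by linarith
    then show False
    proof cases
      case 1 then show False using q0 qN xy by simp
    next
      case 2 then show False using qe[of 0] q0 qN xy by simp
    qed
  qed
  have far: "\<not> E (q i) (q j)" if "i + 2 \<le> j" "j \<le> N" for i j
    using noshort[of i "j - i - 1"] that by simp
  have adj: "E (q i) (q j) \<longleftrightarrow> (j = Suc i \<or> i = Suc j)" if "i \<le> N" "j \<le> N" for i j
  proof (cases "j = Suc i \<or> i = Suc j")
    case True
    then show ?thesis
    proof
      assume "j = Suc i" then show ?thesis using qe[of i] that by simp
    next
      assume "i = Suc j" then show ?thesis using qe[of j] that sym by auto
    qed
  next
    case False
    then consider "i = j" | "i + 2 \<le> j" | "j + 2 \<le> i" by linarith
    then show ?thesis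
    proof cases
      case 1 then show ?thesis using irr by simp
    next
      case 2 then show ?thesis using far[of i j] that False by simp
    next
      case 3 then show ?thesis using far[of j i] that False sym by auto
    qed
  qed
  have inj: "inj_on q {..N}"
  proof (rule inj_onI)
    fix i j assume ij: "i \<in> {..N}" "j \<in> {..N}" "q i = q j"
    show "i = j"
    proof (rule ccontr)
      assume "i \<noteq> j"
      then have "\<exists>i' j'. i' < j' \<and> j' \<le> N \<and> q i' = q j'" using ij by (metis atMost_iff linorder_neqE_nat)
      then obtain i' j' where ij': "i' < j'" "j' \<le> N" "q i' = q j'" by blast
      show False
      proof (cases "j' < N")
        case True
        have eq: "i' + 1 + (j' - i') = Suc j'" using ij' by simp
        have "E (q i') (q (i' + 1 + (j' - i')))" using qe[OF True] ij' eq by simp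
        moreover have "i' + 1 + (j' - i') \<le> N" "1 \<le> j' - i'" using eq True ij' by linarith+
        ultimately show False using noshort by blast
      next
        case False
        then have "j' = N" using ij' by simp
        then have "q i' = y" using ij' qN by simp
        then show False using q0 qC[of i'] xy ij' \<open>j' = N\<close> by (cases "i' = 0") auto
      qed
    qed
  qed
  have "IP N q x y C" unfolding IP_def using q0 qN N2 qC adj inj by blast
  then show ?thesis by blast
qed

end


lemma Suc_mod_less: "k < L \<Longrightarrow> Suc k mod L = (if Suc k = L then 0 else Suc k)"
  by auto

context sgraph
begin

lemma cycle_from_paths:
  assumes p: "IP n p x y A" and r: "IP m r y x B" and AB: "A \<inter> B = {}"
    and noe: "\<And>a b. a \<in> A \<Longrightarrow> b \<in> B \<Longrightarrow> \<not> E a b"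
    and xAB: "x \<notin> A" "x \<notin> B" and yAB: "y \<notin> A" "y \<notin> B" and xy: "x \<noteq> y"
  shows "induced_cycle E (map (\<lambda>k. if k \<le> n then p k else r (k - n)) [0..<n + m])"
proof -
  define c where "c k = (if k \<le> n then p k else r (k - n))" for k
  define L where "L = n + m"
  have p0: "p 0 = x" and pn: "p n = y" and n2: "2 \<le> n" and pA: "\<And>k. 0 < k \<Longrightarrow> k < n \<Longrightarrow> p k \<in> A"
    and padj: "\<And>i j. i \<le> n \<Longrightarrow> j \<le> n \<Longrightarrow> E (p i) (p j) \<longleftrightarrow> (j = Suc i \<or> i = Suc j)"
    and pinj: "inj_on p {..n}" using p unfolding IP_def by auto
  have r0: "r 0 = y" and rm: "r m = x" and m2: "2 \<le> m" and rB: "\<And>k. 0 < k \<Longrightarrow> k < m \<Longrightarrow> r k \<in> B"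
    and radj: "\<And>i j. i \<le> m \<Longrightarrow> j \<le> m \<Longrightarrow> E (r i) (r j) \<longleftrightarrow> (j = Suc i \<or> i = Suc j)"
    and rinj: "inj_on r {..m}" using r unfolding IP_def by auto
  have cs: "map c [0..<L] ! k = c k" if "k < L" for k using that by simp
  have notB: "c k \<notin> B" if kn: "k \<le> n" for k
  proof -
    consider "k = 0" | "k = n" | "0 < k" "k < n" using kn by linarith
    then show ?thesis
    proof cases
      case 1 then show ?thesis using p0 xAB by (simp add: c_def)
    next
      case 2 then show ?thesis using pn yAB by (simp add: c_def)
    next
      case 3 then show ?thesis using pA[OF 3] AB kn by (auto simp: c_def)
    qed
  qed
  have inB: "c k \<in> B" if "n < k" "k < L" for k
    using rB[of "k - n"] that by (simp add: c_def L_def)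
  have mixed: "E (c i) (c j) \<longleftrightarrow> (j = Suc i mod L \<or> i = Suc j mod L)" if i: "i \<le> n" and j: "n < j" "j < L" for i j
  proof -
    define j' where "j' = j - n"
    have j': "0 < j'" "j' < m" "c j = r j'" "j = n + j'" using j by (auto simp: j'_def c_def L_def)
    have sj: "Suc j mod L = (if Suc j = L then 0 else Suc j)" using j(2) by (rule Suc_mod_less)
    have si: "Suc i mod L = Suc i" using i m2 by (simp add: L_def)
    consider "i = 0" | "i = n" | "0 < i" "i < n" using i by linarith
    then show ?thesis
    proof cases
      case 1
      have "E (c i) (c j) \<longleftrightarrow> E (r m) (r j')" using 1 j' p0 rm by (simp add: c_def)
      also have "\<dots> \<longleftrightarrow> m = Suc j'" using radj[of m j'] j' by auto
      also have "\<dots> \<longleftrightarrow> (j = Suc i mod L \<or> i = Suc j mod L)"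
        using 1 j' n2 sj si by (auto simp: L_def)
      finally show ?thesis .
    next
      case 2
      have "E (c i) (c j) \<longleftrightarrow> E (r 0) (r j')" using 2 j' pn r0 by (simp add: c_def)
      also have "\<dots> \<longleftrightarrow> j' = 1" using radj[of 0 j'] j' by auto
      also have "\<dots> \<longleftrightarrow> (j = Suc i mod L \<or> i = Suc j mod L)"
        using 2 j' n2 sj si by (auto simp: L_def)
      finally show ?thesis .
    next
      case 3
      have "\<not> E (c i) (c j)" using noe[OF pA[OF 3] rB[OF j'(1,2)]] 3 j' by (simp add: c_def)
      moreover have "\<not> (j = Suc i mod L \<or> i = Suc j mod L)" using 3 j' sj si by auto
      ultimately show ?thesis by simp
    qed
  qed
  have dist: "distinct (map c [0..<L])"
  proof -
    have "inj_on c {0..<L}"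
    proof (rule inj_onI)
      fix i j assume ij: "i \<in> {0..<L}" "j \<in> {0..<L}" "c i = c j"
      show "i = j"
      proof (cases "i \<le> n")
        case True
        show ?thesis
        proof (cases "j \<le> n")
          case True
          then show ?thesis using \<open>i \<le> n\<close> ij pinj by (auto simp: c_def inj_on_def)
        next
          case False
          then show ?thesis using notB[OF \<open>i \<le> n\<close>] inB[of j] ij by auto
        qed
      next
        case False
        show ?thesis
        proof (cases "j \<le> n")
          case True
          then show ?thesis using notB[OF True] inB[of i] ij False by auto
        next
          case False
          have "r (i - n) = r (j - n)" using ij \<open>\<not> i \<le> n\<close> False by (simp add: c_def)
          then have "i - n = j - n" using rinj ij unfolding inj_on_def L_def by auto
          then show ?thesis using \<open>\<not> i \<le> n\<close> False by simp
        qed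
      qed
    qed
    then show ?thesis by (simp add: distinct_map)
  qed
  have adjall: "E (c i) (c j) \<longleftrightarrow> (j = Suc i mod L \<or> i = Suc j mod L)" if ij: "i < L" "j < L" for i j
  proof (cases "i \<le> n")
    case True
    show ?thesis
    proof (cases "j \<le> n")
      case True
      have "Suc i mod L = Suc i" "Suc j mod L = Suc j" using \<open>i \<le> n\<close> True m2 by (simp_all add: L_def)
      then show ?thesis using padj[OF \<open>i \<le> n\<close> True] \<open>i \<le> n\<close> True by (simp add: c_def)
    next
      case False
      then show ?thesis using mixed[OF \<open>i \<le> n\<close> _ ij(2)] by simp
    qed
  next
    case False
    show ?thesis
    proof (cases "j \<le> n")
      case True
      have "E (c i) (c j) \<longleftrightarrow> E (c j) (c i)" using sym by blast
      then show ?thesis using mixed[OF True _ ij(1)] False by auto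
    next
      case False
      have si: "Suc i mod L = (if Suc i = L then 0 else Suc i)" using ij(1) by (rule Suc_mod_less)
      have sj: "Suc j mod L = (if Suc j = L then 0 else Suc j)" using ij(2) by (rule Suc_mod_less)
      have "E (c i) (c j) \<longleftrightarrow> E (r (i - n)) (r (j - n))" using \<open>\<not> i \<le> n\<close> False by (simp add: c_def)
      also have "\<dots> \<longleftrightarrow> (j - n = Suc (i - n) \<or> i - n = Suc (j - n))"
        using radj[of "i - n" "j - n"] ij by (simp add: L_def)
      also have "\<dots> \<longleftrightarrow> (j = Suc i mod L \<or> i = Suc j mod L)"
        using \<open>\<not> i \<le> n\<close> False si sj ij by auto
      finally show ?thesis .
    qed
  qed
  show ?thesis
    unfolding induced_cycle_def c_def[symmetric] L_def[symmetric]
    using dist adjall n2 m2 by (simp add: L_def)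
qed

end


locale cgraph = sgraph +
  assumes chord: "chordal E"
begin

definition simpl where
  "simpl V v \<longleftrightarrow> v \<in> V \<and> (\<forall>x\<in>V. \<forall>y\<in>V. E v x \<longrightarrow> E v y \<longrightarrow> x \<noteq> y \<longrightarrow> E x y)"

lemma simpl_mem: "simpl V v \<Longrightarrow> v \<in> V"
  by (simp add: simpl_def)

lemma clique_simpl: "is_clique E V \<Longrightarrow> v \<in> V \<Longrightarrow> simpl V v"
  unfolding is_clique_def simpl_def by blast

lemma reach_two: "reach {a, b} a z \<Longrightarrow> \<not> E a b \<Longrightarrow> z = a"
proof (induction rule: rtranclp_induct)
  case base then show ?case by simp
next
  case (step y z)
  then have "y = a" by simp
  then show ?case using step(2,4) irr by (auto simp: Rw_def)
qed

lemma reach_comp: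
  assumes "reach Z a z"
  shows "reach {z. reach Z a z} a z"
  using assms
proof (induction rule: rtranclp_induct)
  case base then show ?case by simp
next
  case (step y z)
  have "reach Z a z" using step(1,2) by (rule rtranclp.rtrancl_into_rtrancl)
  then have "Rw {z. reach Z a z} y z" using step(1,2) by (auto simp: Rw_def)
  with step.IH show ?case by (rule rtranclp.rtrancl_into_rtrancl)
qed

lemma reach_trans: "reach Z x y \<Longrightarrow> reach Z y z \<Longrightarrow> reach Z x z"
  by (rule rtranclp_trans)

lemma dirac:
  assumes "finite V"
  shows "is_clique E V \<or> (\<exists>x y. simpl V x \<and> simpl V y \<and> x \<noteq> y \<and> \<not> E x y)"
  using assms
proof (induction "card V" arbitrary: V rule: less_induct)
  case less
  show ?case
  proof (cases "is_clique E V")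
    case True then show ?thesis by simp
  next
    case False
    then obtain a b where ab: "a \<in> V" "b \<in> V" "a \<noteq> b" "\<not> E a b" unfolding is_clique_def by blast
    define sep where "sep S \<longleftrightarrow> S \<subseteq> V - {a, b} \<and> \<not> reach (V - S) a b" for S
    have "V - (V - {a, b}) = {a, b}" using ab by auto
    then have "sep (V - {a, b})" unfolding sep_def using reach_two[of a b b] ab by auto
    define S where "S = (ARG_MIN card S. sep S)"
    have sepS: "sep S" and minS: "\<And>S'. sep S' \<Longrightarrow> card S \<le> card S'"
      using arg_min_nat_lemma[of sep "V - {a, b}" card, OF \<open>sep (V - {a, b})\<close>] unfolding S_def by auto
    have SV: "S \<subseteq> V" "a \<notin> S" "b \<notin> S" using sepS unfolding sep_def by auto
    have finS: "finite S" using SV(1) less.prems finite_subset by blast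
    define Wv where "Wv = V - S"
    have aW: "a \<in> Wv" and bW: "b \<in> Wv" using ab SV by (auto simp: Wv_def)
    have nab: "\<not> reach Wv a b" using sepS unfolding sep_def Wv_def by simp
    have nba: "\<not> reach Wv b a" using nab reach_sym by blast
    define A where "A = {z. reach Wv a z}"
    define B where "B = {z. reach Wv b z}"
    have AW: "A \<subseteq> Wv" using reach_mem aW by (auto simp: A_def)
    have BW: "B \<subseteq> Wv" using reach_mem bW by (auto simp: B_def)
    have aA: "a \<in> A" and bB: "b \<in> B" by (auto simp: A_def B_def)
    have closA: "z' \<in> A" if "z \<in> A" "z' \<in> Wv" "E z z'" for z z'
      using reach_step[of Wv a z z'] that AW by (auto simp: A_def)
    have closB: "z' \<in> B" if "z \<in> B" "z' \<in> Wv" "E z z'" for z z'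
      using reach_step[of Wv b z z'] that BW by (auto simp: B_def)
    have disj: "A \<inter> B = {}"
    proof (rule ccontr)
      assume "A \<inter> B \<noteq> {}"
      then obtain z where "reach Wv a z" "reach Wv b z" by (auto simp: A_def B_def)
      then have "reach Wv a b" using reach_sym reach_trans by blast
      then show False using nab by simp
    qed
    have noe: "\<not> E x y" if "x \<in> A" "y \<in> B" for x y
    proof
      assume "E x y"
      then have "y \<in> A" using closA[OF that(1)] that(2) BW by blast
      then show False using disj that(2) by blast
    qed
    have nbr: "\<exists>z. reach Wv a' z \<and> E s z" if s: "s \<in> S" and a'b': "a' \<in> {a, b}" "b' \<in> {a, b}" "a' \<noteq> b'" for s a' b'
    proof (rule ccontr)
      assume no: "\<not> (\<exists>z. reach Wv a' z \<and> E s z)"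
      have a'W: "a' \<in> Wv" using a'b' aW bW by auto
      have sV: "s \<in> V" using s SV by auto
      have VS': "V - (S - {s}) = insert s Wv" using sV SV(1) by (auto simp: Wv_def)
      have backr: "reach Wv a' z" if "reach (insert s Wv) a' z" for z
        using that
      proof (induction rule: rtranclp_induct)
        case base then show ?case by simp
      next
        case (step y z)
        have yW: "y \<in> Wv" using reach_mem[OF step.IH a'W] .
        have "z \<noteq> s"
        proof
          assume "z = s"
          then have "E s y" using step(2) sym by (auto simp: Rw_def)
          then show False using no step.IH by blast
        qed
        then have zW: "z \<in> Wv" using step(2) by (auto simp: Rw_def)
        have "E y z" using step(2) by (simp add: Rw_def)
        then show ?case by (rule reach_step[OF step.IH _ yW zW])
      qed
      have "\<not> reach (V - (S - {s})) a b"
      proof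
        assume "reach (V - (S - {s})) a b"
        then have "reach (insert s Wv) a' b'"
          using a'b' ab(3) VS' reach_sym by auto
        then have "reach Wv a' b'" by (rule backr)
        then have "reach Wv a b" using a'b' ab(3) reach_sym by auto
        then show False using nab by simp
      qed
      then have "sep (S - {s})" using SV unfolding sep_def by auto
      then have "card S \<le> card (S - {s})" by (rule minS)
      then show False using finS s card_Diff1_less[OF finS s] by linarith
    qed
    have SA: "s \<notin> A" "s \<notin> B" if "s \<in> S" for s using that AW BW by (auto simp: Wv_def)
    have compA: "reach A c1 c2" if "c1 \<in> A" "c2 \<in> A" for c1 c2
    proof -
      have "reach A a c1" "reach A a c2" using that reach_comp unfolding A_def by auto
      then show ?thesis using reach_sym reach_trans by blast
    qed
    have compB: "reach B c1 c2" if "c1 \<in> B" "c2 \<in> B" for c1 c2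
    proof -
      have "reach B b c1" "reach B b c2" using that reach_comp unfolding B_def by auto
      then show ?thesis using reach_sym reach_trans by blast
    qed
    have Scl: "is_clique E S"
      unfolding is_clique_def
    proof (intro ballI impI)
      fix s1 s2 assume s: "s1 \<in> S" "s2 \<in> S" "s1 \<noteq> s2"
      show "E s1 s2"
      proof (rule ccontr)
        assume ne: "\<not> E s1 s2"
        obtain c1 where c1: "c1 \<in> A" "E s1 c1" using nbr[OF s(1), of a b] ab(3) by (auto simp: A_def)
        obtain c2 where c2: "c2 \<in> A" "E s2 c2" using nbr[OF s(2), of a b] ab(3) by (auto simp: A_def)
        obtain d1 where d1: "d1 \<in> B" "E s1 d1" using nbr[OF s(1), of b a] ab(3) by (auto simp: B_def)
        obtain d2 where d2: "d2 \<in> B" "E s2 d2" using nbr[OF s(2), of b a] ab(3) by (auto simp: B_def)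
        obtain n p where p: "IP n p s1 s2 A"
          using induced_path[OF s(3) ne SA(1)[OF s(1)] SA(1)[OF s(2)] c1(1,2) c2(1) sym[OF c2(2)] compA[OF c1(1) c2(1)]] by blast
        have ne2: "\<not> E s2 s1" using ne sym by blast
        obtain m r where r: "IP m r s2 s1 B"
          using induced_path[OF s(3)[symmetric] ne2 SA(2)[OF s(2)] SA(2)[OF s(1)] d2(1,2) d1(1) sym[OF d1(2)] compB[OF d2(1) d1(1)]] by blast
        have cyc: "induced_cycle E (map (\<lambda>k. if k \<le> n then p k else r (k - n)) [0..<n + m])"
          by (rule cycle_from_paths[OF p r disj noe SA(1)[OF s(1)] SA(2)[OF s(1)] SA(1)[OF s(2)] SA(2)[OF s(2)] s(3)])
        have "length (map (\<lambda>k. if k \<le> n then p k else r (k - n)) [0..<n + m]) = 3"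
          using chord cyc unfolding chordal_def by blast
        moreover have "2 \<le> n" "2 \<le> m" using p r unfolding IP_def by auto
        ultimately show False by simp
      qed
    qed
    have half: "\<exists>x. reach Wv a' x \<and> simpl V x" if a': "a' \<in> Wv" and b': "b' \<in> Wv" "\<not> reach Wv a' b'" for a' b'
    proof -
      define A' where "A' = {z. reach Wv a' z}"
      define V1 where "V1 = A' \<union> S"
      have A'W: "A' \<subseteq> Wv" using reach_mem a' by (auto simp: A'_def)
      have V1V: "V1 \<subseteq> V" using A'W SV by (auto simp: V1_def Wv_def)
      have "b' \<notin> V1" using b' by (auto simp: V1_def A'_def Wv_def)
      moreover have "b' \<in> V" using b' by (auto simp: Wv_def)
      ultimately have "V1 \<subset> V" using V1V by blast
      then have cV1: "card V1 < card V" by (rule psubset_card_mono[OF less.prems])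
      have finV1: "finite V1" using V1V less.prems finite_subset by blast
      have lift: "simpl V x" if x: "x \<in> A'" "simpl V1 x" for x
        unfolding simpl_def
      proof (intro conjI ballI impI)
        show "x \<in> V" using x V1V by (auto simp: V1_def)
        fix u w assume uw: "u \<in> V" "w \<in> V" "E x u" "E x w" "u \<noteq> w"
        have inV1: "z \<in> V1" if "z \<in> V" "E x z" for z
        proof (cases "z \<in> S")
          case True then show ?thesis by (simp add: V1_def)
        next
          case False
          then have "z \<in> Wv" using that by (simp add: Wv_def)
          then have "z \<in> A'" using reach_step[of Wv a' x z] x(1) that(2) A'W by (auto simp: A'_def)
          then show ?thesis by (simp add: V1_def)
        qed
        show "E u w" using x(2) inV1[OF uw(1,3)] inV1[OF uw(2,4)] uw(3-5) unfolding simpl_def by blast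
      qed
      have "\<exists>x\<in>A'. simpl V1 x"
      proof (cases "is_clique E V1")
        case True
        have "a' \<in> A'" by (simp add: A'_def)
        then show ?thesis using clique_simpl[OF True] by (auto simp: V1_def)
      next
        case False
        then obtain x y where xy: "simpl V1 x" "simpl V1 y" "x \<noteq> y" "\<not> E x y"
          using less.hyps[OF cV1 finV1] by blast
        have "x \<in> V1" "y \<in> V1" using simpl_mem xy(1,2) by auto
        show ?thesis
        proof (cases "x \<in> A'")
          case True then show ?thesis using xy by blast
        next
          case xn: False
          show ?thesis
          proof (cases "y \<in> A'")
            case True then show ?thesis using xy by blast
          next
            case False
            then have "x \<in> S" "y \<in> S" using xn \<open>x \<in> V1\<close> \<open>y \<in> V1\<close> by (auto simp: V1_def)
            then have "E x y" using Scl xy(3) unfolding is_clique_def by simp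
            then show ?thesis using xy(4) by simp
          qed
        qed
      qed
      then obtain x where "x \<in> A'" "simpl V1 x" by blast
      then have "simpl V x" "reach Wv a' x" using lift by (auto simp: A'_def)
      then show ?thesis by blast
    qed
    obtain x where x: "reach Wv a x" "simpl V x" using half[OF aW bW nab] by blast
    obtain y where y: "reach Wv b y" "simpl V y" using half[OF bW aW nba] by blast
    have "x \<in> A" "y \<in> B" using x y by (auto simp: A_def B_def)
    then have "x \<noteq> y" "\<not> E x y" using disj noe by auto
    then show ?thesis using x y by blast
  qed
qed

lemma simpl_exists:
  assumes "finite V" "V \<noteq> {}" shows "\<exists>v. simpl V v"
proof (cases "is_clique E V")
  case True
  obtain v where "v \<in> V" using assms(2) by blast
  then show ?thesis using clique_simpl[OF True] by blast
next
  case False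
  then obtain x y where "simpl V x" using dirac[OF assms(1)] by blast
  then show ?thesis by blast
qed

lemma peo:
  assumes "finite V"
  shows "\<exists>q. inj_on q V \<and> (\<forall>v\<in>V. q v < card V) \<and>
     (\<forall>a\<in>V. \<forall>w1\<in>V. \<forall>w2\<in>V. E a w1 \<longrightarrow> E a w2 \<longrightarrow> q w1 < q a \<longrightarrow> q w2 < q a \<longrightarrow> w1 \<noteq> w2 \<longrightarrow> E w1 w2)"
  using assms
proof (induction "card V" arbitrary: V rule: less_induct)
  case less
  show ?case
  proof (cases "V = {}")
    case True then show ?thesis by simp
  next
    case False
    obtain v where v: "simpl V v" using simpl_exists[OF less.prems False] by blast
    have vV: "v \<in> V" using v by (simp add: simpl_def)
    define V' where "V' = V - {v}"
    have cV': "card V' = card V - 1" using vV less.prems by (simp add: V'_def)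
    have cpos: "card V > 0" using less.prems False by (simp add: card_gt_0_iff)
    have "card V' < card V" using cV' cpos by linarith
    then obtain q' where q': "inj_on q' V'" "\<forall>v\<in>V'. q' v < card V'"
      "\<forall>a\<in>V'. \<forall>w1\<in>V'. \<forall>w2\<in>V'. E a w1 \<longrightarrow> E a w2 \<longrightarrow> q' w1 < q' a \<longrightarrow> q' w2 < q' a \<longrightarrow> w1 \<noteq> w2 \<longrightarrow> E w1 w2"
      using less.hyps[of V'] less.prems by (auto simp: V'_def)
    define q where "q = q'(v := card V - 1)"
    have qv: "q v = card V - 1" by (simp add: q_def)
    have qo: "u \<in> V \<Longrightarrow> u \<noteq> v \<Longrightarrow> q u = q' u \<and> q' u < card V - 1" for u
      using q'(2) cV' by (auto simp: q_def V'_def)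
    have "inj_on q V"
    proof (rule inj_onI)
      fix u w assume uw: "u \<in> V" "w \<in> V" "q u = q w"
      show "u = w"
      proof (cases "u = v")
        case True
        then show ?thesis using uw qv qo[of w] by (cases "w = v") auto
      next
        case False
        show ?thesis
        proof (cases "w = v")
          case True then show ?thesis using uw qv qo[of u] False by auto
        next
          case False
          then show ?thesis using uw qo[of u] qo[of w] \<open>u \<noteq> v\<close> q'(1) unfolding inj_on_def V'_def by auto
        qed
      qed
    qed
    moreover have "\<forall>u\<in>V. q u < card V"
    proof
      fix u assume "u \<in> V" then show "q u < card V" using qv qo[of u] cpos by (cases "u = v") auto
    qed
    moreover have "\<forall>a\<in>V. \<forall>w1\<in>V. \<forall>w2\<in>V. E a w1 \<longrightarrow> E a w2 \<longrightarrow> q w1 < q a \<longrightarrow> q w2 < q a \<longrightarrow> w1 \<noteq> w2 \<longrightarrow> E w1 w2"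
    proof (intro ballI impI)
      fix a w1 w2 assume aw: "a \<in> V" "w1 \<in> V" "w2 \<in> V" "E a w1" "E a w2" "q w1 < q a" "q w2 < q a" "w1 \<noteq> w2"
      show "E w1 w2"
      proof (cases "a = v")
        case True then show ?thesis using v aw unfolding simpl_def by blast
      next
        case False
        have qa: "q a = q' a" "q' a < card V - 1" using qo[OF aw(1) False] by auto
        have w1v: "w1 \<noteq> v" using aw(6) qa qv by auto
        have w2v: "w2 \<noteq> v" using aw(7) qa qv by auto
        have mem: "a \<in> V'" "w1 \<in> V'" "w2 \<in> V'" using aw(1-3) False w1v w2v by (auto simp: V'_def)
        have "q' w1 < q' a" using qo[OF aw(2) w1v] qa aw(6) by simp
        moreover have "q' w2 < q' a" using qo[OF aw(3) w2v] qa aw(7) by simp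
        ultimately show ?thesis using q'(3)[rule_format, OF mem aw(4) aw(5)] aw(8) by blast
      qed
    qed
    ultimately show ?thesis by blast
  qed
qed

end


theorem theorem5p2:
  fixes E :: "'v::finite \<Rightarrow> 'v \<Rightarrow> bool" and t :: nat
  assumes "simple_graph E" and "chordal E" and "t \<ge> 2"
  shows "has_linear_resolution (edge_ideal (CH_compl t E) :: ('v, 'k::field) mpoly set) t"
proof -
  interpret cgraph E
    using assms(1,2) by unfold_locales (auto simp: simple_graph_def)
  obtain q :: "'v \<Rightarrow> nat" where q: "inj_on q (UNIV :: 'v set)"
    "\<forall>a\<in>UNIV. \<forall>w1\<in>UNIV. \<forall>w2\<in>UNIV. E a w1 \<longrightarrow> E a w2 \<longrightarrow> q w1 < q a \<longrightarrow> q w2 < q a \<longrightarrow> w1 \<noteq> w2 \<longrightarrow> E w1 w2"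
    using peo[OF finite_UNIV] by blast
  have inj: "inj q" using q(1) by simp
  have peo': "\<And>a w1 w2. E a w1 \<Longrightarrow> E a w2 \<Longrightarrow> q w1 < q a \<Longrightarrow> q w2 < q a \<Longrightarrow> w1 \<noteq> w2 \<Longrightarrow> E w1 w2"
    using q(2) by blast
  have LQ: "\<forall>u\<in>CH_compl t E. \<exists>S. finite S \<and>
     (\<forall>A. (\<exists>g\<in>CH_compl t E. keyq q u < keyq q g \<and> g - u \<subseteq> A) \<longleftrightarrow> A \<inter> S \<noteq> {})"
    by (rule LQ_noncliques[OF inj peo'])
  have mem: "\<forall>S\<in>CH_compl t E. finite S \<and> card S = t" by (simp add: mem_CH_compl)
  have injk: "inj_on (keyq q) (CH_compl t E)"
    by (rule inj_onI) (use keyq_inj[OF inj] in simp)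
  have "\<exists>b d. LR (ideal_gen (sqfree_monom ` CH_compl t E) :: ('v,'k) mpoly set) t b d"
    by (rule LQ_LR[OF _ mem injk LQ]) simp
  then obtain b d where "LR (ideal_gen (sqfree_monom ` CH_compl t E) :: ('v,'k) mpoly set) t b d" by blast
  then show ?thesis unfolding edge_ideal_def by (rule LR_has_linear_resolution)
qed


end
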